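(* Let $(M,g)$ be an $n$-dimensional Riemannian manifold with $n>3$ and constant scalar curvature, let $V$ be a vector field on $M$ with $\nabla_X V=aX$ for all $X\in\chi(M)$ ($\nabla$ the Levi-Civita connection), where $a$ is a nonzero real constant, and let $\eta$ be the $g$-dual $1$-form of $V$. If $(V,\lambda,\mu)$ is an almost $\eta$-Ricci soliton on $(M,g)$, then $M$ is Ricci-flat.
   Context: An almost $\eta$-Ricci soliton $(V,\lambda,\mu)$ on $(M,g)$, for a given $1$-form $\eta$, consists of a vector field $V$ and smooth functions $\lambda,\mu$ on $M$ with $\frac12\pounds_V g+\mathrm{Ric}=\lambda g+\mu\,\eta\otimes\eta$, where $\pounds_V$ is the Lie derivative and $\mathrm{Ric}$ the Ricci tensor of $g$. *)

theory Defs
  imports "HOL-Analysis.Analysis"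
begin

text \<open>Local coordinate (chart) description of a Riemannian manifold: an open set
  U of R^n (points of type real^'n) carrying a smooth metric tensor field g,
  given by its component matrix g x $ i $ j.\<close>

definition pd :: "'n::finite \<Rightarrow> (real^'n \<Rightarrow> real) \<Rightarrow> real^'n \<Rightarrow> real" where
  "pd i f x = deriv (\<lambda>t. f (x + t *\<^sub>R axis i 1)) 0"

definition smooth_on :: "(real^'n::finite) set \<Rightarrow> (real^'n \<Rightarrow> real) \<Rightarrow> bool" where
  "smooth_on U f \<longleftrightarrow> (\<forall>is::'n list. continuous_on U (foldr pd is f) \<and>
      (\<forall>x\<in>U. foldr pd is f differentiable (at x)))"

definition riemannian_metric_on ::
  "(real^'n::finite) set \<Rightarrow> (real^'n \<Rightarrow> real^'n^'n) \<Rightarrow> bool" where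
  "riemannian_metric_on U g \<longleftrightarrow> open U \<and>
     (\<forall>i j. smooth_on U (\<lambda>x. g x $ i $ j)) \<and>
     (\<forall>x\<in>U. \<forall>i j. g x $ i $ j = g x $ j $ i) \<and>
     (\<forall>x\<in>U. \<forall>v. v \<noteq> 0 \<longrightarrow> (\<Sum>i\<in>UNIV. \<Sum>j\<in>UNIV. g x $ i $ j * v $ i * v $ j) > 0)"

definition vector_field_on :: "(real^'n::finite) set \<Rightarrow> (real^'n \<Rightarrow> real^'n) \<Rightarrow> bool" where
  "vector_field_on U V \<longleftrightarrow> (\<forall>k. smooth_on U (\<lambda>x. V x $ k))"

definition ginv :: "(real^'n::finite \<Rightarrow> real^'n^'n) \<Rightarrow> 'n \<Rightarrow> 'n \<Rightarrow> real^'n \<Rightarrow> real" where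
  "ginv g i j x = matrix_inv (g x) $ i $ j"

definition christoffel ::
  "(real^'n::finite \<Rightarrow> real^'n^'n) \<Rightarrow> 'n \<Rightarrow> 'n \<Rightarrow> 'n \<Rightarrow> real^'n \<Rightarrow> real" where
  "christoffel g k i j x = (1/2) * (\<Sum>l\<in>UNIV. ginv g k l x *
      (pd i (\<lambda>y. g y $ j $ l) x + pd j (\<lambda>y. g y $ i $ l) x - pd l (\<lambda>y. g y $ i $ j) x))"

definition cov_deriv ::
  "(real^'n::finite \<Rightarrow> real^'n^'n) \<Rightarrow> (real^'n \<Rightarrow> real^'n) \<Rightarrow> (real^'n \<Rightarrow> real^'n) \<Rightarrow> real^'n \<Rightarrow> real^'n" where
  "cov_deriv g X V x = (\<chi> k. \<Sum>i\<in>UNIV. X x $ i *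
      (pd i (\<lambda>y. V y $ k) x + (\<Sum>j\<in>UNIV. christoffel g k i j x * V x $ j)))"

definition ricci :: "(real^'n::finite \<Rightarrow> real^'n^'n) \<Rightarrow> 'n \<Rightarrow> 'n \<Rightarrow> real^'n \<Rightarrow> real" where
  "ricci g i j x = (\<Sum>k\<in>UNIV. pd k (christoffel g k i j) x - pd j (christoffel g k k i) x
      + (\<Sum>p\<in>UNIV. christoffel g k k p x * christoffel g p i j x
             - christoffel g k j p x * christoffel g p k i x))"

definition scalar_curvature :: "(real^'n::finite \<Rightarrow> real^'n^'n) \<Rightarrow> real^'n \<Rightarrow> real" where
  "scalar_curvature g x = (\<Sum>i\<in>UNIV. \<Sum>j\<in>UNIV. ginv g i j x * ricci g i j x)"

definition lie_deriv_metric ::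
  "(real^'n::finite \<Rightarrow> real^'n^'n) \<Rightarrow> (real^'n \<Rightarrow> real^'n) \<Rightarrow> 'n \<Rightarrow> 'n \<Rightarrow> real^'n \<Rightarrow> real" where
  "lie_deriv_metric g V i j x = (\<Sum>k\<in>UNIV. V x $ k * pd k (\<lambda>y. g y $ i $ j) x
      + g x $ k $ j * pd i (\<lambda>y. V y $ k) x + g x $ i $ k * pd j (\<lambda>y. V y $ k) x)"

definition dual_form :: "(real^'n::finite \<Rightarrow> real^'n^'n) \<Rightarrow> (real^'n \<Rightarrow> real^'n) \<Rightarrow> 'n \<Rightarrow> real^'n \<Rightarrow> real" where
  "dual_form g V i x = (\<Sum>j\<in>UNIV. g x $ i $ j * V x $ j)"

definition almost_eta_ricci_soliton ::
  "(real^'n::finite) set \<Rightarrow> (real^'n \<Rightarrow> real^'n^'n) \<Rightarrow> ('n \<Rightarrow> real^'n \<Rightarrow> real) \<Rightarrow>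
   (real^'n \<Rightarrow> real^'n) \<Rightarrow> (real^'n \<Rightarrow> real) \<Rightarrow> (real^'n \<Rightarrow> real) \<Rightarrow> bool" where
  "almost_eta_ricci_soliton U g eta V lam mu \<longleftrightarrow>
     vector_field_on U V \<and> smooth_on U lam \<and> smooth_on U mu \<and>
     (\<forall>x\<in>U. \<forall>i j. (1/2) * lie_deriv_metric g V i j x + ricci g i j x
        = lam x * g x $ i $ j + mu x * eta i x * eta j x)"

definition ricci_flat_on :: "(real^'n::finite) set \<Rightarrow> (real^'n \<Rightarrow> real^'n^'n) \<Rightarrow> bool" where
  "ricci_flat_on U g \<longleftrightarrow> (\<forall>x\<in>U. \<forall>i j. ricci g i j x = 0)"

end

theory Submission
  imports Defs
begin

section \<open>Partial derivatives\<close>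

lemma pd_hasderiv:
  fixes f :: "real^'n::finite \<Rightarrow> real"
  assumes "f differentiable (at x)"
  shows "((\<lambda>t. f (x + t *\<^sub>R axis i 1)) has_real_derivative pd i f x) (at 0)"
proof -
  obtain f' where f': "(f has_derivative f') (at x)" using assms differentiable_def by blast
  have l: "linear f'" using f' has_derivative_linear by blast
  have d1: "((\<lambda>t::real. x + t *\<^sub>R axis i 1) has_derivative (\<lambda>t. t *\<^sub>R axis i 1)) (at 0)"
    by (auto intro!: derivative_eq_intros)
  have f'': "(f has_derivative f') (at (x + 0 *\<^sub>R axis i 1))" using f' by simp
  have "((\<lambda>t. f (x + t *\<^sub>R axis i 1)) has_derivative (\<lambda>t. f' (t *\<^sub>R axis i 1))) (at 0)"
    using has_derivative_compose[OF d1 f''] by (simp add: o_def)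
  moreover have "(\<lambda>t. f' (t *\<^sub>R axis i 1)) = (*) (f' (axis i 1))"
    using l by (auto simp add: linear_cmul mult.commute)
  ultimately have D: "((\<lambda>t. f (x + t *\<^sub>R axis i 1)) has_real_derivative f' (axis i 1)) (at 0)"
    by (simp add: has_field_derivative_def)
  then have "pd i f x = f' (axis i 1)" unfolding pd_def by (rule DERIV_imp_deriv)
  with D show ?thesis by simp
qed

lemma pd_frechet:
  fixes f :: "real^'n::finite \<Rightarrow> real"
  assumes "(f has_derivative f') (at x)"
  shows "pd i f x = f' (axis i 1)"
proof -
  have "f differentiable (at x)" using assms differentiable_def by blast
  from pd_hasderiv[OF this, of i] have a: "((\<lambda>t. f (x + t *\<^sub>R axis i 1)) has_real_derivative pd i f x) (at 0)" .
  have l: "linear f'" using assms has_derivative_linear by blast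
  have d1: "((\<lambda>t::real. x + t *\<^sub>R axis i 1) has_derivative (\<lambda>t. t *\<^sub>R axis i 1)) (at 0)"
    by (auto intro!: derivative_eq_intros)
  have f'': "(f has_derivative f') (at (x + 0 *\<^sub>R axis i 1))" using assms by simp
  have "((\<lambda>t. f (x + t *\<^sub>R axis i 1)) has_derivative (\<lambda>t. f' (t *\<^sub>R axis i 1))) (at 0)"
    using has_derivative_compose[OF d1 f''] by (simp add: o_def)
  moreover have "(\<lambda>t. f' (t *\<^sub>R axis i 1)) = (*) (f' (axis i 1))"
    using l by (auto simp add: linear_cmul mult.commute)
  ultimately have D: "((\<lambda>t. f (x + t *\<^sub>R axis i 1)) has_real_derivative f' (axis i 1)) (at 0)"
    by (simp add: has_field_derivative_def)
  show ?thesis using DERIV_unique[OF a D] .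
qed

lemma pd_add:
  fixes f g :: "real^'n::finite \<Rightarrow> real"
  assumes "f differentiable (at x)" "g differentiable (at x)"
  shows "pd i (\<lambda>y. f y + g y) x = pd i f x + pd i g x"
  unfolding pd_def[of i "\<lambda>y. f y + g y"]
  by (rule DERIV_imp_deriv, rule DERIV_add[OF pd_hasderiv[OF assms(1)] pd_hasderiv[OF assms(2)]])

lemma pd_diff:
  fixes f g :: "real^'n::finite \<Rightarrow> real"
  assumes "f differentiable (at x)" "g differentiable (at x)"
  shows "pd i (\<lambda>y. f y - g y) x = pd i f x - pd i g x"
  unfolding pd_def[of i "\<lambda>y. f y - g y"]
  by (rule DERIV_imp_deriv, rule DERIV_diff[OF pd_hasderiv[OF assms(1)] pd_hasderiv[OF assms(2)]])

lemma pd_mult: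
  fixes f g :: "real^'n::finite \<Rightarrow> real"
  assumes "f differentiable (at x)" "g differentiable (at x)"
  shows "pd i (\<lambda>y. f y * g y) x = pd i f x * g x + f x * pd i g x"
proof -
  have "((\<lambda>t. f (x + t *\<^sub>R axis i 1) * g (x + t *\<^sub>R axis i 1)) has_real_derivative
     pd i f x * g (x + 0 *\<^sub>R axis i 1) + pd i g x * f (x + 0 *\<^sub>R axis i 1)) (at 0)"
    by (rule DERIV_mult[OF pd_hasderiv[OF assms(1)] pd_hasderiv[OF assms(2)]])
  then show ?thesis unfolding pd_def[of i "\<lambda>y. f y * g y"]
    by (simp add: DERIV_imp_deriv algebra_simps)
qed

lemma pd_const: "pd i (\<lambda>y. c) x = 0"
  unfolding pd_def by simp

lemma pd_cmult:
  fixes f :: "real^'n::finite \<Rightarrow> real"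
  assumes "f differentiable (at x)"
  shows "pd i (\<lambda>y. c * f y) x = c * pd i f x"
  using pd_mult[of "\<lambda>y. c" x f i] assms by (simp add: pd_const)

lemma pd_sum:
  fixes f :: "'a \<Rightarrow> real^'n::finite \<Rightarrow> real"
  assumes "finite S" "\<And>s. s \<in> S \<Longrightarrow> f s differentiable (at x)"
  shows "pd i (\<lambda>y. \<Sum>s\<in>S. f s y) x = (\<Sum>s\<in>S. pd i (f s) x)"
  using assms
proof (induction S rule: finite_induct)
  case empty then show ?case by (simp add: pd_const)
next
  case (insert s S)
  have d: "(\<lambda>y. \<Sum>s\<in>S. f s y) differentiable (at x)"
    using insert by (auto intro!: differentiable_sum)
  have "pd i (\<lambda>y. \<Sum>s\<in>insert s S. f s y) x = pd i (\<lambda>y. f s y + (\<Sum>s\<in>S. f s y)) x"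
    using insert by simp
  also have "\<dots> = pd i (f s) x + pd i (\<lambda>y. \<Sum>s\<in>S. f s y) x"
    using pd_add[of "f s" x "\<lambda>y. \<Sum>s\<in>S. f s y"] d insert by auto
  finally show ?case using insert by simp
qed

lemma pd_local:
  fixes f g :: "real^'n::finite \<Rightarrow> real"
  assumes "open U" "x \<in> U" "\<And>y. y \<in> U \<Longrightarrow> f y = g y"
  shows "pd i f x = pd i g x"
proof -
  obtain e where e: "e > 0" "ball x e \<subseteq> U" using assms open_contains_ball by blast
  have "\<forall>\<^sub>F t in nhds 0. f (x + t *\<^sub>R axis i 1) = g (x + t *\<^sub>R axis i 1)"
  proof -
    have "\<forall>\<^sub>F t in nhds (0::real). t \<in> ball 0 e" using e(1)
      by (intro eventually_nhds_in_open) auto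
    then show ?thesis
    proof (rule eventually_mono)
      fix t :: real assume "t \<in> ball 0 e"
      then have "x + t *\<^sub>R axis i 1 \<in> ball x e" by (simp add: dist_norm)
      then show "f (x + t *\<^sub>R axis i 1) = g (x + t *\<^sub>R axis i 1)" using e assms(3) by blast
    qed
  qed
  then show ?thesis unfolding pd_def by (rule deriv_cong_ev) simp
qed

definition C1 :: "(real^'n::finite) set \<Rightarrow> (real^'n \<Rightarrow> real) \<Rightarrow> bool" where
  "C1 U f \<longleftrightarrow> continuous_on U f \<and> (\<forall>x\<in>U. f differentiable (at x))"

fun smu :: "(real^'n::finite) set \<Rightarrow> nat \<Rightarrow> (real^'n \<Rightarrow> real) \<Rightarrow> bool" where
  "smu U 0 f = C1 U f"
| "smu U (Suc n) f = (C1 U f \<and> (\<forall>i. smu U n (pd i f)))"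

lemma smu_C1: "smu U n f \<Longrightarrow> C1 U f"
  by (cases n) auto

lemma smu_iff: "smu U n f \<longleftrightarrow> (\<forall>is::'n::finite list. length is \<le> n \<longrightarrow> C1 U (foldr pd is f))"
proof (induction n arbitrary: f)
  case 0 then show ?case by auto
next
  case (Suc n)
  show ?case
  proof
    assume a: "smu U (Suc n) f"
    show "\<forall>is::'n list. length is \<le> Suc n \<longrightarrow> C1 U (foldr pd is f)"
    proof (intro allI impI)
      fix "is" :: "'n list" assume l: "length is \<le> Suc n"
      show "C1 U (foldr pd is f)"
      proof (cases "is" rule: rev_cases)
        case Nil then show ?thesis using a by simp
      next
        case (snoc js i)
        have "smu U n (pd i f)" using a by simp
        then have "C1 U (foldr pd js (pd i f))" using Suc[of "pd i f"] l snoc by auto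
        then show ?thesis using snoc by simp
      qed
    qed
  next
    assume a: "\<forall>is::'n list. length is \<le> Suc n \<longrightarrow> C1 U (foldr pd is f)"
    have "C1 U f" using a[rule_format, of "[]"] by simp
    moreover have "smu U n (pd i f)" for i
    proof -
      have "C1 U (foldr pd js (pd i f))" if "length js \<le> n" for js :: "'n list"
        using a[rule_format, of "js @ [i]"] that by simp
      then show ?thesis using Suc by blast
    qed
    ultimately show "smu U (Suc n) f" by simp
  qed
qed

lemma smooth_iff_smu: "smooth_on U f \<longleftrightarrow> (\<forall>n. smu U n f)"
  unfolding smooth_on_def smu_iff C1_def by blast

lemma smu_mono: "smu U (Suc n) f \<Longrightarrow> smu U n f"
  by (induction n arbitrary: f) auto

lemma smu_mono': "m \<le> n \<Longrightarrow> smu U n f \<Longrightarrow> smu U m f"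
proof (induction n)
  case 0 then show ?case by simp
next
  case (Suc n)
  show ?case
  proof (cases "m = Suc n")
    case True then show ?thesis using Suc.prems by simp
  next
    case False
    then have "m \<le> n" using Suc.prems by simp
    moreover have "smu U n f" using Suc.prems(2) by (rule smu_mono)
    ultimately show ?thesis using Suc.IH by blast
  qed
qed

lemma C1_local:
  assumes "open U" "\<And>y. y \<in> U \<Longrightarrow> f y = g y" "C1 U f"
  shows "C1 U g"
proof -
  have "continuous_on U f = continuous_on U g" by (rule continuous_on_cong) (auto simp: assms(2))
  then have "continuous_on U g" using assms(3) unfolding C1_def by blast
  moreover have "g differentiable (at x)" if "x \<in> U" for x
  proof -
    have "f differentiable (at x)" using assms(3) that unfolding C1_def by blast
    then obtain f' where "(f has_derivative f') (at x)" by (auto simp: differentiable_def)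
    then have "(g has_derivative f') (at x)"
      by (rule has_derivative_transform_within_open[OF _ assms(1) that assms(2)])
    then show ?thesis unfolding differentiable_def by blast
  qed
  ultimately show ?thesis unfolding C1_def by blast
qed

lemma smu_local:
  assumes "open U" "\<And>y. y \<in> U \<Longrightarrow> f y = g y" "smu U n f"
  shows "smu U n g"
  using assms(2,3)
proof (induction n arbitrary: f g)
  case 0 then show ?case using C1_local[OF assms(1)] by auto
next
  case (Suc n)
  have "C1 U g" using C1_local[OF assms(1) Suc.prems(1)] Suc.prems(2) by simp
  moreover have "smu U n (pd i g)" for i
  proof -
    have "\<And>y. y \<in> U \<Longrightarrow> pd i f y = pd i g y" using pd_local[OF assms(1)] Suc.prems(1) by blast
    moreover have "smu U n (pd i f)" using Suc.prems(2) by simp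
    ultimately show ?thesis using Suc.IH[of "pd i f" "pd i g"] by blast
  qed
  ultimately show ?case by simp
qed

lemma C1_diff: "C1 U f \<Longrightarrow> x \<in> U \<Longrightarrow> f differentiable (at x)"
  unfolding C1_def by blast

lemma C1_const: "C1 U (\<lambda>y. c)" unfolding C1_def by auto

lemma C1_add: "C1 U f \<Longrightarrow> C1 U g \<Longrightarrow> C1 U (\<lambda>y. f y + g y)"
  unfolding C1_def by (auto intro: continuous_on_add)

lemma C1_mult: "C1 U f \<Longrightarrow> C1 U g \<Longrightarrow> C1 U (\<lambda>y. f y * g y)"
  unfolding C1_def by (auto intro: continuous_on_mult)

lemma C1_inv: "C1 U f \<Longrightarrow> (\<And>y. y \<in> U \<Longrightarrow> f y \<noteq> 0) \<Longrightarrow> C1 U (\<lambda>y. 1 / f y)"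
  unfolding C1_def by (auto intro!: continuous_on_divide differentiable_divide)

lemma smu_const: fixes U :: "(real^'n::finite) set" shows "smu U n (\<lambda>y. c)"
proof (induction n arbitrary: c)
  case 0 then show ?case by (simp add: C1_const)
next
  case (Suc n)
  have "pd i (\<lambda>y::real^'n. c) = (\<lambda>y. 0)" for i :: 'n by (rule ext) (simp add: pd_const)
  then show ?case using Suc by (auto simp: C1_const)
qed

context
  fixes U :: "(real^'n::finite) set"
  assumes opU: "open U"
begin

lemma smu_add: "smu U n f \<Longrightarrow> smu U n g \<Longrightarrow> smu U n (\<lambda>y. f y + g y)"
proof (induction n arbitrary: f g)
  case 0 then show ?case by (simp add: C1_add)
next
  case (Suc n)
  have "smu U n (pd i (\<lambda>y. f y + g y))" for i
  proof -
    have "smu U n (pd i f)" "smu U n (pd i g)" using Suc.prems by auto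
    then have S: "smu U n (\<lambda>y. pd i f y + pd i g y)" using Suc.IH by blast
    have E: "pd i f y + pd i g y = pd i (\<lambda>y. f y + g y) y" if "y \<in> U" for y
    proof -
      have "f differentiable (at y)" "g differentiable (at y)"
        using Suc.prems that by (auto dest!: smu_C1 simp: C1_def)
      then show ?thesis by (simp add: pd_add)
    qed
    show ?thesis by (rule smu_local[OF opU E S])
  qed
  then show ?case using Suc.prems by (auto simp: C1_add)
qed

lemma smu_mult: "smu U n f \<Longrightarrow> smu U n g \<Longrightarrow> smu U n (\<lambda>y. f y * g y)"
proof (induction n arbitrary: f g)
  case 0 then show ?case by (simp add: C1_mult)
next
  case (Suc n)
  have "smu U n (pd i (\<lambda>y. f y * g y))" for i
  proof -
    have a: "smu U n (pd i f)" "smu U n (pd i g)" using Suc.prems by auto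
    have b: "smu U n f" "smu U n g" using Suc.prems smu_mono by blast+
    have "smu U n (\<lambda>y. pd i f y * g y)" "smu U n (\<lambda>y. f y * pd i g y)"
      using Suc.IH a b by blast+
    then have S: "smu U n (\<lambda>y. pd i f y * g y + f y * pd i g y)" by (rule smu_add)
    have E: "pd i f y * g y + f y * pd i g y = pd i (\<lambda>y. f y * g y) y" if "y \<in> U" for y
    proof -
      have "f differentiable (at y)" "g differentiable (at y)"
        using Suc.prems that by (auto dest!: smu_C1 simp: C1_def)
      then show ?thesis by (simp add: pd_mult)
    qed
    show ?thesis by (rule smu_local[OF opU E S])
  qed
  then show ?case using Suc.prems by (auto simp: C1_mult)
qed

lemma smu_cmult: "smu U n f \<Longrightarrow> smu U n (\<lambda>y. c * f y)"
  using smu_mult[OF smu_const] .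

lemma smu_diff: "smu U n f \<Longrightarrow> smu U n g \<Longrightarrow> smu U n (\<lambda>y. f y - g y)"
proof -
  assume a: "smu U n f" "smu U n g"
  have "smu U n (\<lambda>y. f y + (-1) * g y)" by (rule smu_add[OF a(1) smu_cmult[OF a(2)]])
  then show ?thesis by simp
qed

lemma smu_inv:
  assumes "\<And>y. y \<in> U \<Longrightarrow> h y \<noteq> 0" and "smu U n h"
  shows "smu U n (\<lambda>y. 1 / h y)"
  using assms(2)
proof (induction n)
  case 0 then show ?case using assms by (auto intro!: C1_inv)
next
  case (Suc n)
  have ih: "smu U n (\<lambda>y. 1 / h y)" using Suc smu_mono by blast
  have "smu U n (pd i (\<lambda>y. 1 / h y))" for i
  proof -
    have "smu U n (\<lambda>y. (-1) * (pd i h y * ((1 / h y) * (1 / h y))))"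
    proof -
      have a: "smu U n (pd i h)" using Suc.prems by simp
      have "smu U n (\<lambda>y. (1 / h y) * (1 / h y))" by (rule smu_mult[OF ih ih])
      from smu_mult[OF a this] show ?thesis by (rule smu_cmult)
    qed
    note S = this
    have E: "(-1) * (pd i h y * ((1 / h y) * (1 / h y))) = pd i (\<lambda>y. 1 / h y) y" if "y \<in> U" for y
    proof -
      have d: "h differentiable (at y)" using Suc.prems that by (auto dest!: smu_C1 simp: C1_def)
      have "((\<lambda>t. 1 / h (y + t *\<^sub>R axis i 1)) has_real_derivative
          - (pd i h y) / (h (y + 0 *\<^sub>R axis i 1))\<^sup>2) (at 0)"
        using DERIV_inverse_fun[OF pd_hasderiv[OF d, of i]] assms(1)[OF that]
        by (simp add: divide_inverse power2_eq_square)
      then have "pd i (\<lambda>y. 1 / h y) y = - (pd i h y) / (h y)\<^sup>2"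
        unfolding pd_def[of i "\<lambda>y. 1 / h y"] by (simp add: DERIV_imp_deriv)
      then show ?thesis by (simp add: power2_eq_square)
    qed
    show ?thesis by (rule smu_local[OF opU E S])
  qed
  then show ?case using ih smu_C1 by auto
qed

lemma smu_sum: "finite S \<Longrightarrow> (\<And>s. s \<in> S \<Longrightarrow> smu U n (f s)) \<Longrightarrow> smu U n (\<lambda>y. \<Sum>s\<in>S. f s y)"
proof (induction S rule: finite_induct)
  case empty then show ?case by (simp add: smu_const)
next
  case (insert s S)
  have "smu U n (\<lambda>y. f s y + (\<Sum>s\<in>S. f s y))" using insert by (intro smu_add) auto
  then show ?case using insert(1,2) by simp
qed

lemma smu_prod: "finite S \<Longrightarrow> (\<And>s. s \<in> S \<Longrightarrow> smu U n (f s)) \<Longrightarrow> smu U n (\<lambda>y. \<Prod>s\<in>S. f s y)"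
proof (induction S rule: finite_induct)
  case empty then show ?case by (simp add: smu_const)
next
  case (insert s S)
  have "smu U n (\<lambda>y. f s y * (\<Prod>s\<in>S. f s y))" using insert by (intro smu_mult) auto
  then show ?case using insert(1,2) by simp
qed

lemma smooth_add: "smooth_on U f \<Longrightarrow> smooth_on U g \<Longrightarrow> smooth_on U (\<lambda>y. f y + g y)"
  unfolding smooth_iff_smu by (intro allI smu_add) auto
lemma smooth_diff: "smooth_on U f \<Longrightarrow> smooth_on U g \<Longrightarrow> smooth_on U (\<lambda>y. f y - g y)"
  unfolding smooth_iff_smu by (intro allI smu_diff) auto
lemma smooth_mult: "smooth_on U f \<Longrightarrow> smooth_on U g \<Longrightarrow> smooth_on U (\<lambda>y. f y * g y)"
  unfolding smooth_iff_smu by (intro allI smu_mult) auto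
lemma smooth_const: "smooth_on U (\<lambda>y. c)"
  unfolding smooth_iff_smu by (intro allI smu_const)
lemma smooth_sum: "finite S \<Longrightarrow> (\<And>s. s \<in> S \<Longrightarrow> smooth_on U (f s)) \<Longrightarrow> smooth_on U (\<lambda>y. \<Sum>s\<in>S. f s y)"
  unfolding smooth_iff_smu by (intro allI smu_sum) auto
lemma smooth_prod: "finite S \<Longrightarrow> (\<And>s. s \<in> S \<Longrightarrow> smooth_on U (f s)) \<Longrightarrow> smooth_on U (\<lambda>y. \<Prod>s\<in>S. f s y)"
  unfolding smooth_iff_smu by (intro allI smu_prod) auto
lemma smooth_inv: "smooth_on U h \<Longrightarrow> (\<And>y. y \<in> U \<Longrightarrow> h y \<noteq> 0) \<Longrightarrow> smooth_on U (\<lambda>y. 1 / h y)"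
  unfolding smooth_iff_smu by (intro allI smu_inv) auto
lemma smooth_local: assumes "\<And>y. y \<in> U \<Longrightarrow> f y = g y" "smooth_on U f" shows "smooth_on U g"
  unfolding smooth_iff_smu
proof
  fix n
  have "smu U n f" using assms(2) unfolding smooth_iff_smu by (rule spec)
  then show "smu U n g" using smu_local[of U f g n] opU assms(1) by blast
qed
lemma smooth_pd: assumes "smooth_on U f" shows "smooth_on U (pd i f)"
  unfolding smooth_iff_smu
proof
  fix n have "smu U (Suc n) f" using assms unfolding smooth_iff_smu by (rule spec)
  then show "smu U n (pd i f)" by simp
qed
lemma smooth_C1: assumes "smooth_on U f" shows "C1 U f"
proof -
  have "smu U 0 f" using assms unfolding smooth_iff_smu by (rule spec)
  then show ?thesis by simp
qed
lemma smooth_diffb: "smooth_on U f \<Longrightarrow> x \<in> U \<Longrightarrow> f differentiable (at x)"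
  using smooth_C1 unfolding C1_def by simp
lemma smooth_cont: "smooth_on U f \<Longrightarrow> continuous_on U f"
  using smooth_C1 unfolding C1_def by simp

end

lemma line_deriv:
  fixes f :: "real^'n::finite \<Rightarrow> real"
  assumes "f differentiable (at (y + t0 *\<^sub>R axis i 1))"
  shows "((\<lambda>t. f (y + t *\<^sub>R axis i 1)) has_real_derivative pd i f (y + t0 *\<^sub>R axis i 1)) (at t0)"
proof -
  obtain f' where f': "(f has_derivative f') (at (y + t0 *\<^sub>R axis i 1))" using assms differentiable_def by blast
  have l: "linear f'" using f' has_derivative_linear by blast
  have d1: "((\<lambda>t::real. y + t *\<^sub>R axis i 1) has_derivative (\<lambda>t. t *\<^sub>R axis i 1)) (at t0)"
    by (auto intro!: derivative_eq_intros)
  have "((\<lambda>t. f (y + t *\<^sub>R axis i 1)) has_derivative (\<lambda>t. f' (t *\<^sub>R axis i 1))) (at t0)"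
    using has_derivative_compose[OF d1 f'] by (simp add: o_def)
  moreover have "(\<lambda>t. f' (t *\<^sub>R axis i 1)) = (*) (f' (axis i 1))"
    using l by (auto simp add: linear_cmul mult.commute)
  ultimately have D: "((\<lambda>t. f (y + t *\<^sub>R axis i 1)) has_real_derivative f' (axis i 1)) (at t0)"
    by (simp add: has_field_derivative_def)
  moreover have "pd i f (y + t0 *\<^sub>R axis i 1) = f' (axis i 1)" using pd_frechet[OF f'] .
  ultimately show ?thesis by simp
qed

lemma schwarz_aux:
  fixes f :: "real^'n::finite \<Rightarrow> real"
  assumes h: "h > 0"
    and inU: "\<And>y. norm (y - x) < 3 * h \<Longrightarrow> f differentiable (at y)"
    and lin: "linear Di"
    and est: "\<And>y. norm (y - x) < 3 * h \<Longrightarrow> \<bar>pd i f y - pd i f x - Di (y - x)\<bar> \<le> e * norm (y - x)"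
  shows "\<bar>f (x + h *\<^sub>R axis i 1 + h *\<^sub>R axis j 1) - f (x + h *\<^sub>R axis i 1) - f (x + h *\<^sub>R axis j 1) + f x
          - h\<^sup>2 * Di (axis j 1)\<bar> \<le> 3 * e * h\<^sup>2"
proof -
  let ?u = "axis i 1 :: real^'n" and ?v = "axis j 1 :: real^'n"
  define \<phi> where "\<phi> t = f (x + h *\<^sub>R ?v + t *\<^sub>R ?u) - f (x + t *\<^sub>R ?u)" for t
  define D where "D t = pd i f (x + h *\<^sub>R ?v + t *\<^sub>R ?u) - pd i f (x + t *\<^sub>R ?u)" for t
  have e0: "e \<ge> 0"
  proof -
    have n: "norm ((x + h *\<^sub>R ?u) - x) = h" using h by simp
    then have "norm ((x + h *\<^sub>R ?u) - x) < 3 * h" using h by simp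
    from est[OF this] have "0 \<le> e * norm ((x + h *\<^sub>R ?u) - x)" by (meson abs_ge_zero order_trans)
    then have "0 \<le> e * h" by (simp only: n)
    then show ?thesis using h by (simp add: zero_le_mult_iff)
  qed
  have der: "(\<phi> has_real_derivative D t) (at t)" if "0 \<le> t" "t \<le> h" for t
  proof -
    have n1: "norm ((x + h *\<^sub>R ?v + t *\<^sub>R ?u) - x) < 3 * h"
    proof -
      have "norm (h *\<^sub>R ?v + t *\<^sub>R ?u) \<le> norm (h *\<^sub>R ?v) + norm (t *\<^sub>R ?u)" by (rule norm_triangle_ineq)
      also have "\<dots> = h + t" using h that by simp
      finally show ?thesis using h that by simp
    qed
    have n2: "norm ((x + t *\<^sub>R ?u) - x) < 3 * h" using h that by simp
    show ?thesis unfolding \<phi>_def D_def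
      by (rule DERIV_diff[OF line_deriv[OF inU[OF n1]] line_deriv[OF inU[OF n2]]])
  qed
  have "\<exists>\<xi>\<in>{0<..<h}. \<phi> h - \<phi> 0 = (\<lambda>t. (*) (D t)) \<xi> (h - 0)"
  proof (rule mvt_simple[OF h])
    fix t :: real assume "0 \<le> t" "t \<le> h"
    then have "(\<phi> has_derivative (*) (D t)) (at t)" using der unfolding has_field_derivative_def by blast
    then show "(\<phi> has_derivative (\<lambda>t. (*) (D t)) t) (at t within {0..h})" by (rule has_derivative_at_withinI)
  qed
  then obtain \<xi> where xi: "0 < \<xi>" "\<xi> < h" and mv: "\<phi> h - \<phi> 0 = h * D \<xi>" by (auto simp: mult.commute)
  let ?p1 = "x + h *\<^sub>R ?v + \<xi> *\<^sub>R ?u" and ?p2 = "x + \<xi> *\<^sub>R ?u"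
  have np1: "norm (?p1 - x) \<le> h + \<xi>"
  proof -
    have "norm (h *\<^sub>R ?v + \<xi> *\<^sub>R ?u) \<le> norm (h *\<^sub>R ?v) + norm (\<xi> *\<^sub>R ?u)" by (rule norm_triangle_ineq)
    also have "\<dots> = h + \<xi>" using h xi by simp
    finally show ?thesis by simp
  qed
  have np1': "norm (?p1 - x) < 3 * h" using np1 xi by simp
  have np2: "norm (?p2 - x) = \<xi>" using xi by simp
  have "e * norm (?p1 - x) \<le> e * (h + \<xi>)" by (rule mult_left_mono[OF np1 e0])
  then have E1: "\<bar>pd i f ?p1 - pd i f x - Di (?p1 - x)\<bar> \<le> e * (h + \<xi>)"
    using est[OF np1'] by linarith
  have E2: "\<bar>pd i f ?p2 - pd i f x - Di (?p2 - x)\<bar> \<le> e * \<xi>"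
    using est[of ?p2] np2 xi by simp
  have "Di (?p1 - x) - Di (?p2 - x) = h * Di ?v"
    using lin by (simp add: linear_add linear_cmul)
  then have "\<bar>D \<xi> - h * Di ?v\<bar> \<le> e * (h + \<xi>) + e * \<xi>"
    unfolding D_def using E1 E2 by linarith
  also have "\<dots> = e * (h + \<xi> + \<xi>)" by (simp add: algebra_simps)
  also have "\<dots> \<le> e * (3 * h)" using xi by (intro mult_left_mono[OF _ e0]) simp
  finally have "\<bar>D \<xi> - h * Di ?v\<bar> \<le> e * (3 * h)" .
  then have "h * \<bar>D \<xi> - h * Di ?v\<bar> \<le> h * (e * (3 * h))" using h by simp
  moreover have "\<bar>h * D \<xi> - h\<^sup>2 * Di ?v\<bar> = h * \<bar>D \<xi> - h * Di ?v\<bar>"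
  proof -
    have "h * D \<xi> - h\<^sup>2 * Di ?v = h * (D \<xi> - h * Di ?v)" by (simp add: power2_eq_square algebra_simps)
    then show ?thesis using h by (simp add: abs_mult)
  qed
  moreover have "h * (e * (3 * h)) = 3 * e * h\<^sup>2" by (simp add: power2_eq_square algebra_simps)
  ultimately have "\<bar>h * D \<xi> - h\<^sup>2 * Di ?v\<bar> \<le> 3 * e * h\<^sup>2" by simp
  moreover have "\<phi> h - \<phi> 0 = f (x + h *\<^sub>R ?u + h *\<^sub>R ?v) - f (x + h *\<^sub>R ?u) - f (x + h *\<^sub>R ?v) + f x"
    unfolding \<phi>_def by (simp add: algebra_simps)
  ultimately show ?thesis using mv by simp
qed

lemma schwarz:
  fixes f :: "real^'n::finite \<Rightarrow> real"
  assumes U: "open U" "x \<in> U" and fd: "\<And>y. y \<in> U \<Longrightarrow> f differentiable (at y)"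
    and di: "pd i f differentiable (at x)" and dj: "pd j f differentiable (at x)"
  shows "pd j (pd i f) x = pd i (pd j f) x"
proof -
  obtain Di where Di: "(pd i f has_derivative Di) (at x)" using di differentiable_def by blast
  obtain Dj where Dj: "(pd j f has_derivative Dj) (at x)" using dj differentiable_def by blast
  have li: "linear Di" "linear Dj" using Di Dj has_derivative_linear by blast+
  have "\<bar>Di (axis j 1) - Dj (axis i 1)\<bar> \<le> 6 * e" if e: "e > 0" for e
  proof -
    obtain d1 where d1: "d1 > 0" "\<And>y. norm (y - x) < d1 \<Longrightarrow> norm (pd i f y - pd i f x - Di (y - x)) \<le> e * norm (y - x)"
      using Di e unfolding has_derivative_at_alt by blast
    obtain d2 where d2: "d2 > 0" "\<And>y. norm (y - x) < d2 \<Longrightarrow> norm (pd j f y - pd j f x - Dj (y - x)) \<le> e * norm (y - x)"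
      using Dj e unfolding has_derivative_at_alt by blast
    obtain r where r: "r > 0" "ball x r \<subseteq> U" using U open_contains_ball by blast
    define h where "h = min (min d1 d2) r / 3"
    have h: "h > 0" using d1 d2 r by (simp add: h_def)
    have inU: "f differentiable (at y)" if "norm (y - x) < 3 * h" for y
    proof -
      have "y \<in> ball x r" using that by (simp add: h_def dist_norm norm_minus_commute)
      then show ?thesis using r fd by blast
    qed
    have A: "\<bar>f (x + h *\<^sub>R axis i 1 + h *\<^sub>R axis j 1) - f (x + h *\<^sub>R axis i 1) - f (x + h *\<^sub>R axis j 1) + f x
          - h\<^sup>2 * Di (axis j 1)\<bar> \<le> 3 * e * h\<^sup>2"
      by (rule schwarz_aux[OF h inU li(1)]) (use d1 in \<open>auto simp: h_def\<close>)
    have B: "\<bar>f (x + h *\<^sub>R axis j 1 + h *\<^sub>R axis i 1) - f (x + h *\<^sub>R axis j 1) - f (x + h *\<^sub>R axis i 1) + f x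
          - h\<^sup>2 * Dj (axis i 1)\<bar> \<le> 3 * e * h\<^sup>2"
      by (rule schwarz_aux[OF h inU li(2)]) (use d2 in \<open>auto simp: h_def\<close>)
    have eq: "x + h *\<^sub>R axis j 1 + h *\<^sub>R axis i 1 = x + h *\<^sub>R axis i 1 + h *\<^sub>R axis j 1" by (simp add: algebra_simps)
    have "\<bar>h\<^sup>2 * Di (axis j 1) - h\<^sup>2 * Dj (axis i 1)\<bar> \<le> 6 * e * h\<^sup>2" using A B[unfolded eq] by linarith
    moreover have "\<bar>h\<^sup>2 * Di (axis j 1) - h\<^sup>2 * Dj (axis i 1)\<bar> = h\<^sup>2 * \<bar>Di (axis j 1) - Dj (axis i 1)\<bar>"
      by (simp add: abs_mult flip: right_diff_distrib)
    ultimately have "h\<^sup>2 * \<bar>Di (axis j 1) - Dj (axis i 1)\<bar> \<le> h\<^sup>2 * (6 * e)" by (simp add: algebra_simps)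
    then show ?thesis using h by (simp add: mult_le_cancel_left)
  qed
  then have "Di (axis j 1) = Dj (axis i 1)"
  proof -
    assume *: "\<And>e. e > 0 \<Longrightarrow> \<bar>Di (axis j 1) - Dj (axis i 1)\<bar> \<le> 6 * e"
    show ?thesis
    proof (rule ccontr)
      assume "Di (axis j 1) \<noteq> Dj (axis i 1)"
      then have p: "\<bar>Di (axis j 1) - Dj (axis i 1)\<bar> > 0" by simp
      have "\<bar>Di (axis j 1) - Dj (axis i 1)\<bar> \<le> 6 * (\<bar>Di (axis j 1) - Dj (axis i 1)\<bar> / 12)"
        using p by (intro *) simp
      moreover have "\<And>a::real. a \<le> 6 * (a / 12) \<Longrightarrow> 0 < a \<Longrightarrow> False" by linarith
      ultimately show False using p by blast
    qed
  qed
  then show ?thesis using pd_frechet[OF Di] pd_frechet[OF Dj] by simp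
qed

lemma schwarz_smooth:
  assumes "open U" "x \<in> U" "smooth_on U f"
  shows "pd j (pd i f) x = pd i (pd j f) x"
  using schwarz[OF assms(1,2)] assms smooth_diffb smooth_pd by blast

lemma sum_delta_l: "(\<Sum>p\<in>(UNIV::'n::finite set). (if l = p then 1 else 0) * (T p::real)) = T l"
proof -
  have "(\<Sum>p\<in>(UNIV::'n set). (if l = p then 1 else 0) * T p) = (\<Sum>p\<in>(UNIV::'n set). if l = p then T p else 0)"
    by (rule sum.cong) auto
  then show ?thesis by simp
qed

lemma sum_delta_r: "(\<Sum>p\<in>(UNIV::'n::finite set). (if p = l then 1 else 0) * (T p::real)) = T l"
proof -
  have "(\<Sum>p\<in>(UNIV::'n set). (if p = l then 1 else 0) * T p) = (\<Sum>p\<in>(UNIV::'n set). if p = l then T p else 0)"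
    by (rule sum.cong) auto
  then show ?thesis by simp
qed

lemma pos_def_invertible:
  fixes A :: "real^'n::finite^'n"
  assumes "\<forall>v. v \<noteq> 0 \<longrightarrow> (\<Sum>i\<in>UNIV. \<Sum>j\<in>UNIV. A $ i $ j * v $ i * v $ j) > 0"
  shows "invertible A"
proof -
  have "v = 0" if "A *v v = 0" for v
  proof (rule ccontr)
    assume "v \<noteq> 0"
    then have "(\<Sum>i\<in>UNIV. \<Sum>j\<in>UNIV. A $ i $ j * v $ i * v $ j) > 0" using assms by blast
    moreover have "(\<Sum>i\<in>UNIV. \<Sum>j\<in>UNIV. A $ i $ j * v $ i * v $ j) = (\<Sum>i\<in>UNIV. v $ i * (A *v v) $ i)"
      by (simp add: matrix_vector_mult_def sum_distrib_left algebra_simps)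
    ultimately show False using that by simp
  qed
  then obtain B where "B ** A = mat 1" using matrix_left_invertible_ker by blast
  then have "A ** B = mat 1" using matrix_left_right_inverse by blast
  with \<open>B ** A = mat 1\<close> show ?thesis unfolding invertible_def by blast
qed

lemma matrix_inv_props:
  fixes A :: "real^'n::finite^'n"
  assumes "invertible A"
  shows "A ** matrix_inv A = mat 1" "matrix_inv A ** A = mat 1"
proof -
  have "\<exists>B. A ** B = mat 1 \<and> B ** A = mat 1" using assms unfolding invertible_def by blast
  then have "A ** matrix_inv A = mat 1 \<and> matrix_inv A ** A = mat 1"
    unfolding matrix_inv_def by (rule someI_ex)
  then show "A ** matrix_inv A = mat 1" "matrix_inv A ** A = mat 1" by auto
qed

lemma matrix_inv_cramer:
  fixes A :: "real^'n::finite^'n"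
  assumes "invertible A"
  shows "matrix_inv A $ i $ j = det (\<chi> r c. if c = i then axis j 1 $ r else A $ r $ c) / det A"
proof -
  let ?B = "matrix_inv A"
  have d: "det A \<noteq> 0" using assms invertible_det_nz by blast
  have "A *v (\<chi> r. ?B $ r $ j) = axis j 1"
  proof -
    have "(A ** ?B) $ r $ j = (if r = j then 1 else 0)" for r using matrix_inv_props(1)[OF assms] by (simp add: mat_def)
    then show ?thesis by (simp add: vec_eq_iff matrix_vector_mult_def matrix_matrix_mult_def axis_def)
  qed
  then have "(\<chi> r. ?B $ r $ j) = (\<chi> k. det (\<chi> r c. if c = k then axis j 1 $ r else A $ r $ c) / det A)"
    using cramer[OF d] by blast
  then show ?thesis by (simp add: vec_eq_iff)
qed

lemma inv_sym:
  fixes A :: "real^'n::finite^'n"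
  assumes "invertible A" "\<And>i j. A $ i $ j = A $ j $ i"
  shows "matrix_inv A $ i $ j = matrix_inv A $ j $ i"
proof -
  let ?B = "matrix_inv A"
  have tA: "transpose A = A" using assms(2) by (simp add: transpose_def vec_eq_iff)
  have "transpose ?B ** A = mat 1"
  proof -
    have "transpose ?B ** A = transpose (transpose A ** ?B)" by (simp add: matrix_transpose_mul)
    also have "\<dots> = mat 1" using tA matrix_inv_props(1)[OF assms(1)] by (simp add: transpose_mat)
    finally show ?thesis .
  qed
  then have "transpose ?B = ?B"
  proof -
    assume l: "transpose ?B ** A = mat 1"
    have "transpose ?B = transpose ?B ** (A ** ?B)" using matrix_inv_props(1)[OF assms(1)] by simp
    also have "\<dots> = (transpose ?B ** A) ** ?B" by (simp add: matrix_mul_assoc)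
    also have "\<dots> = ?B" using l by simp
    finally show ?thesis .
  qed
  then show ?thesis by (metis transpose_def vec_lambda_beta)
qed

locale rm =
  fixes U :: "(real^'n::finite) set" and g :: "real^'n \<Rightarrow> real^'n^'n"
  assumes rm: "riemannian_metric_on U g"
begin

lemma opU: "open U" using rm unfolding riemannian_metric_on_def by blast
lemma gsym: "x \<in> U \<Longrightarrow> g x $ i $ j = g x $ j $ i" using rm unfolding riemannian_metric_on_def by blast
lemma gsmooth: "smooth_on U (\<lambda>x. g x $ i $ j)" using rm unfolding riemannian_metric_on_def by blast
lemma gpos: "x \<in> U \<Longrightarrow> v \<noteq> 0 \<Longrightarrow> (\<Sum>i\<in>UNIV. \<Sum>j\<in>UNIV. g x $ i $ j * v $ i * v $ j) > 0"
  using rm unfolding riemannian_metric_on_def by blast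
lemma ginvt: "x \<in> U \<Longrightarrow> invertible (g x)"
  using gpos by (intro pos_def_invertible) blast

lemma g_ginv: "x \<in> U \<Longrightarrow> (\<Sum>l\<in>UNIV. g x $ i $ l * ginv g l k x) = (if i = k then 1 else 0)"
proof -
  assume x: "x \<in> U"
  have "(g x ** matrix_inv (g x)) $ i $ k = mat 1 $ i $ k" using matrix_inv_props(1)[OF ginvt[OF x]] by simp
  then show ?thesis by (simp add: matrix_matrix_mult_def mat_def ginv_def)
qed

lemma ginv_g: "x \<in> U \<Longrightarrow> (\<Sum>l\<in>UNIV. ginv g i l x * g x $ l $ k) = (if i = k then 1 else 0)"
proof -
  assume x: "x \<in> U"
  have "(matrix_inv (g x) ** g x) $ i $ k = mat 1 $ i $ k" using matrix_inv_props(2)[OF ginvt[OF x]] by simp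
  then show ?thesis by (simp add: matrix_matrix_mult_def mat_def ginv_def)
qed

lemma ginv_sym: "x \<in> U \<Longrightarrow> ginv g i j x = ginv g j i x"
  unfolding ginv_def using inv_sym[OF ginvt gsym] by blast

lemma det_smooth_gen:
  assumes "\<And>r c. smooth_on U (\<lambda>x. M x $ r $ c)"
  shows "smooth_on U (\<lambda>x. det (M x))"
  unfolding det_def
  by (intro smooth_sum[OF opU] smooth_mult[OF opU] smooth_const[OF opU] smooth_prod[OF opU] assms) auto

lemma ginv_smooth: "smooth_on U (ginv g i j)"
proof -
  have n: "smooth_on U (\<lambda>x. det (\<chi> r c. if c = i then axis j 1 $ r else g x $ r $ c))"
  proof (rule det_smooth_gen)
    fix r c
    show "smooth_on U (\<lambda>x. (\<chi> r c. if c = i then axis j 1 $ r else g x $ r $ c) $ r $ c)"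
      by (cases "c = i") (simp_all add: smooth_const[OF opU] gsmooth)
  qed
  have d: "smooth_on U (\<lambda>x. 1 / det (g x))"
    by (rule smooth_inv[OF opU det_smooth_gen[OF gsmooth]]) (use ginvt invertible_det_nz in blast)
  have "smooth_on U (\<lambda>x. det (\<chi> r c. if c = i then axis j 1 $ r else g x $ r $ c) * (1 / det (g x)))"
    by (rule smooth_mult[OF opU n d])
  then show ?thesis
    by (rule smooth_local[OF opU, rotated]) (simp add: ginv_def matrix_inv_cramer[OF ginvt])
qed

abbreviation Gm :: "'n \<Rightarrow> 'n \<Rightarrow> 'n \<Rightarrow> real^'n \<Rightarrow> real" ("\<Gamma>") where
  "\<Gamma> k i j \<equiv> christoffel g k i j"

abbreviation dg :: "'n \<Rightarrow> 'n \<Rightarrow> 'n \<Rightarrow> real^'n \<Rightarrow> real" where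
  "dg m i j \<equiv> pd m (\<lambda>y. g y $ i $ j)"

lemma dg_sym: "x \<in> U \<Longrightarrow> dg m i j x = dg m j i x"
  by (rule pd_local[OF opU]) (auto simp: gsym)

lemma chr_smooth: "smooth_on U (\<Gamma> k i j)"
  unfolding christoffel_def
  by (intro smooth_mult[OF opU] smooth_const[OF opU] smooth_sum[OF opU] smooth_add[OF opU]
        smooth_diff[OF opU] ginv_smooth smooth_pd[OF opU] gsmooth) auto

lemma chr_sym: "x \<in> U \<Longrightarrow> \<Gamma> k i j x = \<Gamma> k j i x"
  unfolding christoffel_def using dg_sym by (simp add: algebra_simps)

lemma chr_low: "x \<in> U \<Longrightarrow> (\<Sum>k\<in>UNIV. g x $ l $ k * \<Gamma> k i j x) = (1/2) * (dg i j l x + dg j i l x - dg l i j x)"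
proof -
  assume x: "x \<in> U"
  let ?T = "\<lambda>p. dg i j p x + dg j i p x - dg l i j x"
  have "(\<Sum>k\<in>UNIV. g x $ l $ k * \<Gamma> k i j x)
      = (1/2) * (\<Sum>k\<in>UNIV. \<Sum>p\<in>UNIV. g x $ l $ k * ginv g k p x * (dg i j p x + dg j i p x - dg p i j x))"
    unfolding christoffel_def by (simp add: sum_distrib_left algebra_simps)
  also have "\<dots> = (1/2) * (\<Sum>p\<in>UNIV. (\<Sum>k\<in>UNIV. g x $ l $ k * ginv g k p x) * (dg i j p x + dg j i p x - dg p i j x))"
    by (subst sum.swap) (simp add: sum_distrib_right)
  also have "\<dots> = (1/2) * (dg i j l x + dg j i l x - dg l i j x)"
    by (simp add: g_ginv[OF x] sum_delta_l)
  finally show ?thesis .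
qed

lemma compat: "x \<in> U \<Longrightarrow> dg m i j x = (\<Sum>l\<in>UNIV. g x $ l $ j * \<Gamma> l m i x + g x $ i $ l * \<Gamma> l m j x)"
proof -
  assume x: "x \<in> U"
  have "(\<Sum>l\<in>UNIV. g x $ l $ j * \<Gamma> l m i x) = (\<Sum>l\<in>UNIV. g x $ j $ l * \<Gamma> l m i x)"
    using gsym[OF x] by simp
  also have "\<dots> = (1/2) * (dg m i j x + dg i m j x - dg j m i x)" by (rule chr_low[OF x])
  finally have a: "(\<Sum>l\<in>UNIV. g x $ l $ j * \<Gamma> l m i x) = (1/2) * (dg m i j x + dg i m j x - dg j m i x)" .
  have b: "(\<Sum>l\<in>UNIV. g x $ i $ l * \<Gamma> l m j x) = (1/2) * (dg m j i x + dg j m i x - dg i m j x)"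
    by (rule chr_low[OF x])
  show ?thesis using a b dg_sym[OF x, of m i j] by (simp add: sum.distrib algebra_simps)
qed

end

context rm
begin

lemma sm_g[simp]: "smooth_on U (\<lambda>x. g x $ i $ j)" by (rule gsmooth)
lemma sm_ginv[simp]: "smooth_on U (ginv g i j)" by (rule ginv_smooth)
lemma sm_chr[simp]: "smooth_on U (\<Gamma> k i j)" by (rule chr_smooth)
lemma sm_pd[simp]: "smooth_on U f \<Longrightarrow> smooth_on U (pd i f)" by (rule smooth_pd[OF opU])
lemma sm_add[simp]: "smooth_on U f \<Longrightarrow> smooth_on U h \<Longrightarrow> smooth_on U (\<lambda>y. f y + h y)" by (rule smooth_add[OF opU])
lemma sm_diff[simp]: "smooth_on U f \<Longrightarrow> smooth_on U h \<Longrightarrow> smooth_on U (\<lambda>y. f y - h y)" by (rule smooth_diff[OF opU])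
lemma sm_mult[simp]: "smooth_on U f \<Longrightarrow> smooth_on U h \<Longrightarrow> smooth_on U (\<lambda>y. f y * h y)" by (rule smooth_mult[OF opU])
lemma sm_const[simp]: "smooth_on U (\<lambda>y. c)" by (rule smooth_const[OF opU])
lemma sm_sum[simp]: "(\<And>s. smooth_on U (f s)) \<Longrightarrow> smooth_on U (\<lambda>y. \<Sum>s\<in>(UNIV::'n set). f s y)"
  by (rule smooth_sum[OF opU]) auto
lemma sm_uminus[simp]: "smooth_on U f \<Longrightarrow> smooth_on U (\<lambda>y. - f y)"
  using smooth_diff[OF opU smooth_const[OF opU, of 0] ] by simp

lemma pU_add[simp]: "x \<in> U \<Longrightarrow> smooth_on U f \<Longrightarrow> smooth_on U h \<Longrightarrow> pd i (\<lambda>y. f y + h y) x = pd i f x + pd i h x"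
  by (rule pd_add) (auto intro: smooth_diffb[OF opU])
lemma pU_diff[simp]: "x \<in> U \<Longrightarrow> smooth_on U f \<Longrightarrow> smooth_on U h \<Longrightarrow> pd i (\<lambda>y. f y - h y) x = pd i f x - pd i h x"
  by (rule pd_diff) (auto intro: smooth_diffb[OF opU])
lemma pU_mult[simp]: "x \<in> U \<Longrightarrow> smooth_on U f \<Longrightarrow> smooth_on U h \<Longrightarrow> pd i (\<lambda>y. f y * h y) x = pd i f x * h x + f x * pd i h x"
  by (rule pd_mult) (auto intro: smooth_diffb[OF opU])
lemma pU_sum[simp]: "x \<in> U \<Longrightarrow> (\<And>s. smooth_on U (f s)) \<Longrightarrow> pd i (\<lambda>y. \<Sum>s\<in>(UNIV::'n set). f s y) x = (\<Sum>s\<in>UNIV. pd i (f s) x)"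
  by (rule pd_sum) (auto intro: smooth_diffb[OF opU])
lemma pU_uminus[simp]: "x \<in> U \<Longrightarrow> smooth_on U f \<Longrightarrow> pd i (\<lambda>y. - f y) x = - pd i f x"
  using pd_diff[of "\<lambda>y. 0" x f i] by (simp add: pd_const smooth_diffb[OF opU])
lemma pU_const[simp]: "pd i (\<lambda>y. c) x = 0" by (rule pd_const)

end

locale sol = rm U g for U :: "(real^'n::finite) set" and g +
  fixes V :: "real^'n \<Rightarrow> real^'n" and a :: real
  assumes vf: "vector_field_on U V"
    and cov: "\<forall>X. \<forall>x\<in>U. cov_deriv g X V x = a *\<^sub>R X x"
begin

lemma sm_V[simp]: "smooth_on U (\<lambda>y. V y $ k)" using vf unfolding vector_field_on_def by blast

abbreviation P :: "'n \<Rightarrow> 'n \<Rightarrow> real^'n \<Rightarrow> real" where "P k j \<equiv> pd j (\<lambda>y. V y $ k)"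

definition K :: "'n \<Rightarrow> 'n \<Rightarrow> 'n \<Rightarrow> 'n \<Rightarrow> real^'n \<Rightarrow> real" where
  "K k i j m x = pd i (\<Gamma> k j m) x - pd j (\<Gamma> k i m) x + (\<Sum>l\<in>UNIV. \<Gamma> k i l x * \<Gamma> l j m x - \<Gamma> k j l x * \<Gamma> l i m x)"

lemma dV: "x \<in> U \<Longrightarrow> P k j x = a * (if j = k then 1 else 0) - (\<Sum>m\<in>UNIV. \<Gamma> k j m x * V x $ m)"
proof -
  assume x: "x \<in> U"
  have "cov_deriv g (\<lambda>_. axis j 1) V x $ k = (a *\<^sub>R axis j 1) $ k" using cov x by simp
  moreover have "cov_deriv g (\<lambda>_. axis j 1) V x $ k = (\<Sum>i\<in>UNIV. (if i = j then 1 else 0) * (P k i x + (\<Sum>m\<in>UNIV. \<Gamma> k i m x * V x $ m)))"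
    unfolding cov_deriv_def axis_def by (simp only: vec_lambda_beta)
  ultimately have "P k j x + (\<Sum>m\<in>UNIV. \<Gamma> k j m x * V x $ m) = a * (if k = j then 1 else 0)"
    by (simp only: sum_delta_r) (simp add: axis_def)
  then show ?thesis by (auto simp: algebra_simps)
qed

lemma dd: "x \<in> U \<Longrightarrow> pd i (P k j) x = - (\<Sum>m\<in>UNIV. pd i (\<Gamma> k j m) x * V x $ m) - a * \<Gamma> k j i x
     + (\<Sum>m\<in>UNIV. \<Sum>l\<in>UNIV. \<Gamma> k j m x * \<Gamma> m i l x * V x $ l)"
proof -
  assume x: "x \<in> U"
  have "pd i (P k j) x = pd i (\<lambda>y. a * (if j = k then 1 else 0) - (\<Sum>m\<in>UNIV. \<Gamma> k j m y * V y $ m)) x"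
    by (rule pd_local[OF opU x]) (simp add: dV)
  also have "\<dots> = - (\<Sum>m\<in>UNIV. pd i (\<Gamma> k j m) x * V x $ m + \<Gamma> k j m x * P m i x)"
    using x by simp
  also have "\<dots> = - (\<Sum>m\<in>UNIV. pd i (\<Gamma> k j m) x * V x $ m) - (\<Sum>m\<in>UNIV. \<Gamma> k j m x * P m i x)"
    by (simp add: sum.distrib)
  also have "(\<Sum>m\<in>UNIV. \<Gamma> k j m x * P m i x) = a * \<Gamma> k j i x - (\<Sum>m\<in>UNIV. \<Sum>l\<in>UNIV. \<Gamma> k j m x * \<Gamma> m i l x * V x $ l)"
  proof -
    have "(\<Sum>m\<in>UNIV. \<Gamma> k j m x * P m i x) = (\<Sum>m\<in>UNIV. (if i = m then 1 else 0) * (a * \<Gamma> k j m x) - (\<Sum>l\<in>UNIV. \<Gamma> k j m x * \<Gamma> m i l x * V x $ l))"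
      by (rule sum.cong) (auto simp: dV[OF x] sum_distrib_left algebra_simps)
    also have "\<dots> = a * \<Gamma> k j i x - (\<Sum>m\<in>UNIV. \<Sum>l\<in>UNIV. \<Gamma> k j m x * \<Gamma> m i l x * V x $ l)"
      by (simp add: sum_subtractf sum_delta_l)
    finally show ?thesis .
  qed
  finally show ?thesis by simp
qed

lemma F4: "x \<in> U \<Longrightarrow> (\<Sum>m\<in>UNIV. V x $ m * K k i j m x) = 0"
proof -
  assume x: "x \<in> U"
  have "pd i (P k j) x = pd j (P k i) x" by (rule schwarz_smooth[OF opU x sm_V])
  then have e: "- (\<Sum>m\<in>UNIV. pd i (\<Gamma> k j m) x * V x $ m) - a * \<Gamma> k j i x
     + (\<Sum>m\<in>UNIV. \<Sum>l\<in>UNIV. \<Gamma> k j m x * \<Gamma> m i l x * V x $ l)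
     = - (\<Sum>m\<in>UNIV. pd j (\<Gamma> k i m) x * V x $ m) - a * \<Gamma> k i j x
     + (\<Sum>m\<in>UNIV. \<Sum>l\<in>UNIV. \<Gamma> k i m x * \<Gamma> m j l x * V x $ l)"
    by (simp only: dd[OF x])
  have s1: "(\<Sum>m\<in>UNIV. \<Sum>l\<in>UNIV. \<Gamma> k j m x * \<Gamma> m i l x * V x $ l) = (\<Sum>m\<in>UNIV. V x $ m * (\<Sum>l\<in>UNIV. \<Gamma> k j l x * \<Gamma> l i m x))"
    by (subst sum.swap) (simp add: sum_distrib_left algebra_simps)
  have s2: "(\<Sum>m\<in>UNIV. \<Sum>l\<in>UNIV. \<Gamma> k i m x * \<Gamma> m j l x * V x $ l) = (\<Sum>m\<in>UNIV. V x $ m * (\<Sum>l\<in>UNIV. \<Gamma> k i l x * \<Gamma> l j m x))"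
    by (subst sum.swap) (simp add: sum_distrib_left algebra_simps)
  have "(\<Sum>m\<in>UNIV. V x $ m * K k i j m x) = (\<Sum>m\<in>UNIV. pd i (\<Gamma> k j m) x * V x $ m) - (\<Sum>m\<in>UNIV. pd j (\<Gamma> k i m) x * V x $ m)
     + (\<Sum>m\<in>UNIV. V x $ m * (\<Sum>l\<in>UNIV. \<Gamma> k i l x * \<Gamma> l j m x)) - (\<Sum>m\<in>UNIV. V x $ m * (\<Sum>l\<in>UNIV. \<Gamma> k j l x * \<Gamma> l i m x))"
    unfolding K_def by (simp add: sum.distrib sum_subtractf algebra_simps sum_distrib_left)
  moreover have "a * \<Gamma> k j i x = a * \<Gamma> k i j x" using chr_sym[OF x, of k i j] by simp
  ultimately show ?thesis using e s1 s2 by linarith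
qed

end

lemma pair_sym:
  fixes R :: "'n \<Rightarrow> 'n \<Rightarrow> 'n \<Rightarrow> 'n \<Rightarrow> real"
  assumes a1: "\<And>a b c d. R a b c d = - R b a c d"
    and a2: "\<And>a b c d. R a b c d = - R a b d c"
    and b: "\<And>a b c d. R a b c d + R b c a d + R c a b d = 0"
  shows "R a b c d = R c d a b"
proof -
  have "R a b c d + R b c a d + R c a b d = 0" "R b c d a + R c d b a + R d b c a = 0"
    "R c d a b + R d a c b + R a c d b = 0" "R d a b c + R a b d c + R b d a c = 0" by (rule b)+
  moreover have "R b c a d = - R b c d a" "R c a b d = - R a c b d" "R a c b d = - R a c d b"
    "R c d b a = - R c d a b" "R d b c a = - R b d c a" "R b d c a = - R b d a c"
    "R d a c b = - R a d c b" "R a d c b = - R a d b c" "R d a b c = - R a d b c" "R a b d c = - R a b c d"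
    using a1 a2 by blast+
  ultimately show ?thesis by linarith
qed

lemma sum_if_mult1: "(\<Sum>l\<in>(UNIV::'n::finite set). f l * (if l = k then c else 0)) = f k * (c::real)"
proof -
  have "(\<Sum>l\<in>(UNIV::'n set). f l * (if l = k then c else 0)) = (\<Sum>l\<in>(UNIV::'n set). if l = k then f l * c else 0)"
    by (rule sum.cong) auto
  then show ?thesis by simp
qed

lemma sum_if_mult2: "(\<Sum>l\<in>(UNIV::'n::finite set). f l * (if k = l then c else 0)) = f k * (c::real)"
proof -
  have "(\<Sum>l\<in>(UNIV::'n set). f l * (if k = l then c else 0)) = (\<Sum>l\<in>(UNIV::'n set). if k = l then f l * c else 0)"
    by (rule sum.cong) auto
  then show ?thesis by simp
qed

context rm
begin

lemma dsym: "x \<in> U \<Longrightarrow> pd m (\<Gamma> k i j) x = pd m (\<Gamma> k j i) x"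
  by (rule pd_local[OF opU]) (auto simp: chr_sym)

end

context sol
begin

definition Rl :: "'n \<Rightarrow> 'n \<Rightarrow> 'n \<Rightarrow> 'n \<Rightarrow> real^'n \<Rightarrow> real" where
  "Rl m i j d x = (\<Sum>k\<in>UNIV. g x $ d $ k * K k m i j x)"

lemma K_anti: "K k m i j x = - K k i m j x"
  unfolding K_def by (simp add: sum_subtractf algebra_simps)

lemma K_bianchi: "x \<in> U \<Longrightarrow> K k m i j x + K k i j m x + K k j m i x = 0"
proof -
  assume x: "x \<in> U"
  have q: "(\<Sum>l\<in>UNIV. \<Gamma> k m l x * \<Gamma> l i j x - \<Gamma> k i l x * \<Gamma> l m j x) + (\<Sum>l\<in>UNIV. \<Gamma> k i l x * \<Gamma> l j m x - \<Gamma> k j l x * \<Gamma> l i m x)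
     + (\<Sum>l\<in>UNIV. \<Gamma> k j l x * \<Gamma> l m i x - \<Gamma> k m l x * \<Gamma> l j i x) = 0"
  proof -
    have "(\<Sum>l\<in>UNIV. \<Gamma> k m l x * \<Gamma> l i j x - \<Gamma> k i l x * \<Gamma> l m j x) + (\<Sum>l\<in>UNIV. \<Gamma> k i l x * \<Gamma> l j m x - \<Gamma> k j l x * \<Gamma> l i m x)
     + (\<Sum>l\<in>UNIV. \<Gamma> k j l x * \<Gamma> l m i x - \<Gamma> k m l x * \<Gamma> l j i x)
     = (\<Sum>l\<in>UNIV. (\<Gamma> k m l x * \<Gamma> l i j x - \<Gamma> k i l x * \<Gamma> l m j x) + (\<Gamma> k i l x * \<Gamma> l j m x - \<Gamma> k j l x * \<Gamma> l i m x)
     + (\<Gamma> k j l x * \<Gamma> l m i x - \<Gamma> k m l x * \<Gamma> l j i x))" by (simp add: sum.distrib)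
    also have "\<dots> = 0"
      by (rule sum.neutral) (auto simp: chr_sym[OF x, of _ i j] chr_sym[OF x, of _ j m] chr_sym[OF x, of _ m i])
    finally show ?thesis .
  qed
  have l: "pd m (\<Gamma> k i j) x = pd m (\<Gamma> k j i) x" "pd i (\<Gamma> k m j) x = pd i (\<Gamma> k j m) x"
    "pd j (\<Gamma> k i m) x = pd j (\<Gamma> k m i) x" using dsym[OF x] by blast+
  show ?thesis unfolding K_def using q l by linarith
qed


lemma dgexp: "x \<in> U \<Longrightarrow> pd m (dg i j d) x =
   (\<Sum>l\<in>UNIV. \<Sum>p\<in>UNIV. g x $ p $ d * \<Gamma> p m l x * \<Gamma> l i j x)
 + (\<Sum>l\<in>UNIV. \<Sum>p\<in>UNIV. g x $ l $ p * \<Gamma> p m d x * \<Gamma> l i j x)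
 + (\<Sum>l\<in>UNIV. \<Sum>p\<in>UNIV. g x $ p $ l * \<Gamma> p m j x * \<Gamma> l i d x)
 + (\<Sum>l\<in>UNIV. \<Sum>p\<in>UNIV. g x $ j $ p * \<Gamma> p m l x * \<Gamma> l i d x)
 + (\<Sum>l\<in>UNIV. g x $ l $ d * pd m (\<Gamma> l i j) x) + (\<Sum>l\<in>UNIV. g x $ j $ l * pd m (\<Gamma> l i d) x)"
proof -
  assume x: "x \<in> U"
  have "pd m (dg i j d) x = pd m (\<lambda>y. \<Sum>l\<in>UNIV. g y $ l $ d * \<Gamma> l i j y + g y $ j $ l * \<Gamma> l i d y) x"
    by (rule pd_local[OF opU x]) (rule compat)
  also have "\<dots> = (\<Sum>l\<in>UNIV. dg m l d x * \<Gamma> l i j x + g x $ l $ d * pd m (\<Gamma> l i j) x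
        + (dg m j l x * \<Gamma> l i d x + g x $ j $ l * pd m (\<Gamma> l i d) x))"
    using x by simp
  also have "\<dots> = (\<Sum>l\<in>UNIV. dg m l d x * \<Gamma> l i j x) + (\<Sum>l\<in>UNIV. dg m j l x * \<Gamma> l i d x)
        + (\<Sum>l\<in>UNIV. g x $ l $ d * pd m (\<Gamma> l i j) x) + (\<Sum>l\<in>UNIV. g x $ j $ l * pd m (\<Gamma> l i d) x)"
    by (simp add: sum.distrib)
  also have "(\<Sum>l\<in>UNIV. dg m l d x * \<Gamma> l i j x) = (\<Sum>l\<in>UNIV. \<Sum>p\<in>UNIV. g x $ p $ d * \<Gamma> p m l x * \<Gamma> l i j x)
     + (\<Sum>l\<in>UNIV. \<Sum>p\<in>UNIV. g x $ l $ p * \<Gamma> p m d x * \<Gamma> l i j x)"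
    by (simp add: compat[OF x] sum_distrib_right distrib_right sum.distrib)
  also have "(\<Sum>l\<in>UNIV. dg m j l x * \<Gamma> l i d x) = (\<Sum>l\<in>UNIV. \<Sum>p\<in>UNIV. g x $ p $ l * \<Gamma> p m j x * \<Gamma> l i d x)
     + (\<Sum>l\<in>UNIV. \<Sum>p\<in>UNIV. g x $ j $ p * \<Gamma> p m l x * \<Gamma> l i d x)"
    by (simp add: compat[OF x] sum_distrib_right distrib_right sum.distrib)
  finally show ?thesis by simp
qed

lemma K_anti2: "x \<in> U \<Longrightarrow> Rl m i j d x + Rl m i d j x = 0"
proof -
  assume x: "x \<in> U"
  have sw: "pd m (dg i j d) x = pd i (dg m j d) x"
    by (rule schwarz_smooth[OF opU x]) simp
  have q23: "(\<Sum>l\<in>UNIV. \<Sum>p\<in>UNIV. g x $ p $ l * \<Gamma> p i j x * \<Gamma> l m d x) = (\<Sum>l\<in>UNIV. \<Sum>p\<in>UNIV. g x $ l $ p * \<Gamma> p m d x * \<Gamma> l i j x)"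
    for m i j d by (subst sum.swap) (simp add: mult_ac)
  have r1: "Rl m i j d x = (\<Sum>l\<in>UNIV. g x $ l $ d * pd m (\<Gamma> l i j) x) - (\<Sum>l\<in>UNIV. g x $ l $ d * pd i (\<Gamma> l m j) x)
     + (\<Sum>l\<in>UNIV. \<Sum>p\<in>UNIV. g x $ p $ d * \<Gamma> p m l x * \<Gamma> l i j x) - (\<Sum>l\<in>UNIV. \<Sum>p\<in>UNIV. g x $ p $ d * \<Gamma> p i l x * \<Gamma> l m j x)"
    for m i j d
  proof -
    have "Rl m i j d x = (\<Sum>k\<in>UNIV. g x $ k $ d * pd m (\<Gamma> k i j) x) - (\<Sum>k\<in>UNIV. g x $ k $ d * pd i (\<Gamma> k m j) x)
       + (\<Sum>k\<in>UNIV. \<Sum>l\<in>UNIV. g x $ k $ d * \<Gamma> k m l x * \<Gamma> l i j x) - (\<Sum>k\<in>UNIV. \<Sum>l\<in>UNIV. g x $ k $ d * \<Gamma> k i l x * \<Gamma> l m j x)"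
      unfolding Rl_def K_def using gsym[OF x]
      by (simp add: algebra_simps sum.distrib sum_subtractf sum_distrib_left)
    moreover have "(\<Sum>k\<in>UNIV. \<Sum>l\<in>UNIV. g x $ k $ d * \<Gamma> k m l x * \<Gamma> l i j x) = (\<Sum>l\<in>UNIV. \<Sum>p\<in>UNIV. g x $ p $ d * \<Gamma> p m l x * \<Gamma> l i j x)"
      "(\<Sum>k\<in>UNIV. \<Sum>l\<in>UNIV. g x $ k $ d * \<Gamma> k i l x * \<Gamma> l m j x) = (\<Sum>l\<in>UNIV. \<Sum>p\<in>UNIV. g x $ p $ d * \<Gamma> p i l x * \<Gamma> l m j x)"
      by (rule sum.swap)+
    ultimately show ?thesis by simp
  qed
  have r2: "Rl m i d j x = (\<Sum>l\<in>UNIV. g x $ j $ l * pd m (\<Gamma> l i d) x) - (\<Sum>l\<in>UNIV. g x $ j $ l * pd i (\<Gamma> l m d) x)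
     + (\<Sum>l\<in>UNIV. \<Sum>p\<in>UNIV. g x $ j $ p * \<Gamma> p m l x * \<Gamma> l i d x) - (\<Sum>l\<in>UNIV. \<Sum>p\<in>UNIV. g x $ j $ p * \<Gamma> p i l x * \<Gamma> l m d x)"
  proof -
    have "Rl m i d j x = (\<Sum>k\<in>UNIV. g x $ j $ k * pd m (\<Gamma> k i d) x) - (\<Sum>k\<in>UNIV. g x $ j $ k * pd i (\<Gamma> k m d) x)
       + (\<Sum>k\<in>UNIV. \<Sum>l\<in>UNIV. g x $ j $ k * \<Gamma> k m l x * \<Gamma> l i d x) - (\<Sum>k\<in>UNIV. \<Sum>l\<in>UNIV. g x $ j $ k * \<Gamma> k i l x * \<Gamma> l m d x)"
      unfolding Rl_def K_def
      by (simp add: algebra_simps sum.distrib sum_subtractf sum_distrib_left)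
    moreover have "(\<Sum>k\<in>UNIV. \<Sum>l\<in>UNIV. g x $ j $ k * \<Gamma> k m l x * \<Gamma> l i d x) = (\<Sum>l\<in>UNIV. \<Sum>p\<in>UNIV. g x $ j $ p * \<Gamma> p m l x * \<Gamma> l i d x)"
      "(\<Sum>k\<in>UNIV. \<Sum>l\<in>UNIV. g x $ j $ k * \<Gamma> k i l x * \<Gamma> l m d x) = (\<Sum>l\<in>UNIV. \<Sum>p\<in>UNIV. g x $ j $ p * \<Gamma> p i l x * \<Gamma> l m d x)"
      by (rule sum.swap)+
    ultimately show ?thesis by simp
  qed
  show ?thesis using sw dgexp[OF x, of m i j d] dgexp[OF x, of i m j d] r1[of m i j d] r2 q23[of i j m d] q23[of m j i d]
    by linarith
qed


lemma Rl_pair: "x \<in> U \<Longrightarrow> Rl m i j d x = Rl j d m i x"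
proof -
  assume x: "x \<in> U"
  show ?thesis
  proof (rule pair_sym[where R="\<lambda>a b c d. Rl a b c d x"])
    fix a b c d
    show "Rl a b c d x = - Rl b a c d x" unfolding Rl_def
      by (subst K_anti) (simp add: sum_negf)
    show "Rl a b c d x = - Rl a b d c x" using K_anti2[OF x, of a b c d] by simp
    have "Rl a b c d x + Rl b c a d x + Rl c a b d x = (\<Sum>k\<in>UNIV. g x $ d $ k * (K k a b c x + K k b c a x + K k c a b x))"
      unfolding Rl_def by (simp add: sum.distrib algebra_simps)
    also have "\<dots> = 0" using K_bianchi[OF x] by simp
    finally show "Rl a b c d x + Rl b c a d x + Rl c a b d x = 0" .
  qed
qed

lemma K_inv: "x \<in> U \<Longrightarrow> K k m i j x = (\<Sum>d\<in>UNIV. ginv g k d x * Rl m i j d x)"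
proof -
  assume x: "x \<in> U"
  have "(\<Sum>d\<in>UNIV. ginv g k d x * Rl m i j d x) = (\<Sum>d\<in>UNIV. \<Sum>q\<in>UNIV. ginv g k d x * g x $ d $ q * K q m i j x)"
    unfolding Rl_def by (simp add: sum_distrib_left mult.assoc)
  also have "\<dots> = (\<Sum>q\<in>UNIV. (\<Sum>d\<in>UNIV. ginv g k d x * g x $ d $ q) * K q m i j x)"
    by (subst sum.swap) (simp add: sum_distrib_right)
  also have "\<dots> = K k m i j x" by (simp add: ginv_g[OF x] sum_delta_l)
  finally show ?thesis by simp
qed

lemma G1: "x \<in> U \<Longrightarrow> (\<Sum>m\<in>UNIV. V x $ m * K k m i j x) = 0"
proof -
  assume x: "x \<in> U"
  have z: "(\<Sum>m\<in>UNIV. V x $ m * Rl j d m i x) = 0" for d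
  proof -
    have "(\<Sum>m\<in>UNIV. V x $ m * Rl j d m i x) = (\<Sum>m\<in>UNIV. \<Sum>q\<in>UNIV. g x $ i $ q * (V x $ m * K q j d m x))"
      unfolding Rl_def by (simp add: sum_distrib_left mult_ac)
    also have "\<dots> = (\<Sum>q\<in>UNIV. \<Sum>m\<in>UNIV. g x $ i $ q * (V x $ m * K q j d m x))" by (rule sum.swap)
    also have "\<dots> = (\<Sum>q\<in>UNIV. g x $ i $ q * (\<Sum>m\<in>UNIV. V x $ m * K q j d m x))" by (simp add: sum_distrib_left)
    also have "\<dots> = 0" by (simp add: F4[OF x])
    finally show ?thesis .
  qed
  have "(\<Sum>m\<in>UNIV. V x $ m * K k m i j x) = (\<Sum>m\<in>UNIV. \<Sum>d\<in>UNIV. V x $ m * (ginv g k d x * Rl j d m i x))"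
    by (simp add: K_inv[OF x] Rl_pair[OF x, of _ i j] sum_distrib_left)
  also have "\<dots> = (\<Sum>d\<in>UNIV. ginv g k d x * (\<Sum>m\<in>UNIV. V x $ m * Rl j d m i x))"
    by (subst sum.swap) (simp add: sum_distrib_left algebra_simps)
  also have "\<dots> = 0" by (simp add: z)
  finally show ?thesis .
qed

definition Phi :: "'n \<Rightarrow> 'n \<Rightarrow> 'n \<Rightarrow> real^'n \<Rightarrow> real" where
  "Phi k i j x = - pd i (P k j) x + (\<Sum>l\<in>UNIV. \<Gamma> l i j x * P k l x - \<Gamma> k l j x * P l i x - \<Gamma> k i l x * P l j x)"

lemma Lam: "x \<in> U \<Longrightarrow> (\<Sum>m\<in>UNIV. V x $ m * pd m (\<Gamma> k i j) x) = Phi k i j x"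
proof -
  assume x: "x \<in> U"
  let ?S1 = "\<Sum>m\<in>UNIV. \<Sum>l\<in>UNIV. \<Gamma> k j m x * \<Gamma> m i l x * V x $ l"
  let ?S2 = "\<Sum>l\<in>UNIV. \<Sum>m\<in>UNIV. \<Gamma> l i j x * \<Gamma> k l m x * V x $ m"
  let ?S3 = "\<Sum>l\<in>UNIV. \<Sum>m\<in>UNIV. \<Gamma> k l j x * \<Gamma> l i m x * V x $ m"
  let ?S4 = "\<Sum>l\<in>UNIV. \<Sum>m\<in>UNIV. \<Gamma> k i l x * \<Gamma> l j m x * V x $ m"
  have t1: "(\<Sum>l\<in>UNIV. \<Gamma> l i j x * P k l x) = a * \<Gamma> k i j x - ?S2"
    by (simp add: dV[OF x] right_diff_distrib sum_subtractf sum_distrib_left mult.assoc if_distrib[of "\<lambda>c. a * c"] sum_if_mult1 sum_if_mult2)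
  have t2: "(\<Sum>l\<in>UNIV. \<Gamma> k l j x * P l i x) = a * \<Gamma> k i j x - ?S3"
    by (simp add: dV[OF x] right_diff_distrib sum_subtractf sum_distrib_left mult.assoc if_distrib[of "\<lambda>c. a * c"] sum_if_mult1 sum_if_mult2)
  have t3: "(\<Sum>l\<in>UNIV. \<Gamma> k i l x * P l j x) = a * \<Gamma> k i j x - ?S4"
    by (simp add: dV[OF x] right_diff_distrib sum_subtractf sum_distrib_left mult.assoc if_distrib[of "\<lambda>c. a * c"] sum_if_mult1 sum_if_mult2)
  have s13: "?S1 = ?S3" by (rule sum.cong[OF refl], rule sum.cong[OF refl]) (simp add: chr_sym[OF x, of k j])
  have "Phi k i j x = (\<Sum>m\<in>UNIV. pd i (\<Gamma> k j m) x * V x $ m) + a * \<Gamma> k j i x - ?S1 + (a * \<Gamma> k i j x - ?S2)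
       - (a * \<Gamma> k i j x - ?S3) - (a * \<Gamma> k i j x - ?S4)"
    unfolding Phi_def by (simp add: dd[OF x] sum_subtractf t1 t2 t3)
  then have phi: "Phi k i j x = (\<Sum>m\<in>UNIV. pd i (\<Gamma> k j m) x * V x $ m) - ?S2 + ?S4"
    using s13 chr_sym[OF x, of k j i] by simp
  have g1: "(\<Sum>m\<in>UNIV. V x $ m * (pd m (\<Gamma> k i j) x - pd i (\<Gamma> k m j) x + (\<Sum>l\<in>UNIV. \<Gamma> k m l x * \<Gamma> l i j x - \<Gamma> k i l x * \<Gamma> l m j x))) = 0"
    using G1[OF x, of k i j] unfolding K_def .
  have e1: "(\<Sum>m\<in>UNIV. V x $ m * pd i (\<Gamma> k m j) x) = (\<Sum>m\<in>UNIV. pd i (\<Gamma> k j m) x * V x $ m)"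
  proof (rule sum.cong[OF refl])
    fix m show "V x $ m * pd i (\<Gamma> k m j) x = pd i (\<Gamma> k j m) x * V x $ m" using dsym[OF x, of i k m j] by simp
  qed
  have e2: "(\<Sum>m\<in>UNIV. V x $ m * (\<Sum>l\<in>UNIV. \<Gamma> k m l x * \<Gamma> l i j x)) = ?S2"
    by (subst sum.swap) (simp add: sum_distrib_left chr_sym[OF x, of k] mult_ac)
  have e3: "(\<Sum>m\<in>UNIV. V x $ m * (\<Sum>l\<in>UNIV. \<Gamma> k i l x * \<Gamma> l m j x)) = ?S4"
  proof -
    have "(\<Sum>m\<in>UNIV. V x $ m * (\<Sum>l\<in>UNIV. \<Gamma> k i l x * \<Gamma> l m j x)) = (\<Sum>m\<in>UNIV. \<Sum>l\<in>UNIV. \<Gamma> k i l x * \<Gamma> l j m x * V x $ m)"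
    proof (rule sum.cong[OF refl])
      fix m show "V x $ m * (\<Sum>l\<in>UNIV. \<Gamma> k i l x * \<Gamma> l m j x) = (\<Sum>l\<in>UNIV. \<Gamma> k i l x * \<Gamma> l j m x * V x $ m)"
        by (simp add: sum_distrib_left chr_sym[OF x, of _ m j] mult_ac)
    qed
    also have "\<dots> = ?S4" by (rule sum.swap)
    finally show ?thesis .
  qed
  have "(\<Sum>m\<in>UNIV. V x $ m * pd m (\<Gamma> k i j) x) = (\<Sum>m\<in>UNIV. V x $ m * pd i (\<Gamma> k m j) x)
     - (\<Sum>m\<in>UNIV. V x $ m * (\<Sum>l\<in>UNIV. \<Gamma> k m l x * \<Gamma> l i j x)) + (\<Sum>m\<in>UNIV. V x $ m * (\<Sum>l\<in>UNIV. \<Gamma> k i l x * \<Gamma> l m j x))"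
    using g1 by (simp add: algebra_simps sum.distrib sum_subtractf sum_distrib_left)
  then show ?thesis using phi e1 e2 e3 by simp
qed

end

lemma s3_inner: "(\<Sum>a\<in>A. \<Sum>b\<in>B. \<Sum>c\<in>C. F a b c) = (\<Sum>a\<in>A. \<Sum>c\<in>C. \<Sum>b\<in>B. F a b c)"
  by (rule sum.cong[OF refl]) (rule sum.swap)
lemma s3_outer: "(\<Sum>a\<in>A. \<Sum>b\<in>B. \<Sum>c\<in>C. F a b c) = (\<Sum>b\<in>B. \<Sum>a\<in>A. \<Sum>c\<in>C. F a b c)"
  by (rule sum.swap)
lemma s3_312: "(\<Sum>a\<in>A. \<Sum>b\<in>B. \<Sum>c\<in>C. F a b c) = (\<Sum>c\<in>C. \<Sum>a\<in>A. \<Sum>b\<in>B. F a b c)"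
  by (subst s3_inner) (rule sum.swap)
lemma s3_13: "(\<Sum>a\<in>A. \<Sum>b\<in>B. \<Sum>c\<in>C. F a b c) = (\<Sum>c\<in>C. \<Sum>b\<in>B. \<Sum>a\<in>A. F a b c)"
  by (subst s3_312) (rule s3_inner)

lemma big_identity:
  fixes G :: "'n::finite \<Rightarrow> 'n \<Rightarrow> 'n \<Rightarrow> real" and D T :: "'n \<Rightarrow> 'n \<Rightarrow> 'n \<Rightarrow> 'n \<Rightarrow> real"
    and Pm :: "'n \<Rightarrow> 'n \<Rightarrow> real" and Wm :: "'n \<Rightarrow> 'n \<Rightarrow> 'n \<Rightarrow> real"
  assumes Gs: "\<And>k a b. G k a b = G k b a" and Ws: "\<And>k a b. Wm k a b = Wm k b a"
    and Ts: "\<And>k. T k i k j = T j k k i"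
  shows "(\<Sum>k\<in>UNIV. - T k i k j + (\<Sum>l\<in>UNIV. D k l i j * Pm k l + G l i j * Wm k k l - (D k k l j * Pm l i + G k l j * Wm l k i) - (D k k i l * Pm l j + G k i l * Wm l k j)))
     - (\<Sum>k\<in>UNIV. \<Sum>l\<in>UNIV. Pm l k * D l k i j)
     - ((\<Sum>k\<in>UNIV. - T j k k i + (\<Sum>l\<in>UNIV. D j l k i * Pm k l + G l k i * Wm k j l - (D j k l i * Pm l k + G k l i * Wm l j k) - (D j k k l * Pm l i + G k k l * Wm l j i)))
        - (\<Sum>k\<in>UNIV. \<Sum>l\<in>UNIV. Pm l j * D l k k i))
     + (\<Sum>k\<in>UNIV. \<Sum>p\<in>UNIV.
          (- Wm k k p + (\<Sum>l\<in>UNIV. G l k p * Pm k l - G k l p * Pm l k - G k k l * Pm l p)) * G p i j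
        + G k k p * (- Wm p i j + (\<Sum>l\<in>UNIV. G l i j * Pm p l - G p l j * Pm l i - G p i l * Pm l j))
        - (- Wm k j p + (\<Sum>l\<in>UNIV. G l j p * Pm k l - G k l p * Pm l j - G k j l * Pm l p)) * G p k i
        - G k j p * (- Wm p k i + (\<Sum>l\<in>UNIV. G l k i * Pm p l - G p l i * Pm l k - G p k l * Pm l i)))
     + (\<Sum>l\<in>UNIV. Pm l i * (\<Sum>k\<in>UNIV. D k k l j - D j k k l + (\<Sum>p\<in>UNIV. G k k p * G p l j - G k j p * G p k l)))
     + (\<Sum>l\<in>UNIV. Pm l j * (\<Sum>k\<in>UNIV. D k k i l - D l k k i + (\<Sum>p\<in>UNIV. G k k p * G p i l - G k l p * G p k i)))
     = 0"
proof -
  have expand: "?thesis \<longleftrightarrow> (-(\<Sum>k\<in>UNIV. T k i k j)) + ((\<Sum>k\<in>UNIV. \<Sum>l\<in>UNIV. D k l i j * Pm k l)) + ((\<Sum>k\<in>UNIV. \<Sum>l\<in>UNIV. G l i j * Wm k k l)) + (-(\<Sum>k\<in>UNIV. \<Sum>l\<in>UNIV. D k k l j * Pm l i)) + (-(\<Sum>k\<in>UNIV. \<Sum>l\<in>UNIV. G k l j * Wm l k i)) + (-(\<Sum>k\<in>UNIV. \<Sum>l\<in>UNIV. D k k i l * Pm l j)) + (-(\<Sum>k\<in>UNIV. \<Sum>l\<in>UNIV. G k i l * Wm l k j)) + (-(\<Sum>k\<in>UNIV. \<Sum>l\<in>UNIV. Pm l k * D l k i j)) + ((\<Sum>k\<in>UNIV.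 T j k k i)) + (-(\<Sum>k\<in>UNIV. \<Sum>l\<in>UNIV. D j l k i * Pm k l)) + (-(\<Sum>k\<in>UNIV. \<Sum>l\<in>UNIV. G l k i * Wm k j l)) + ((\<Sum>k\<in>UNIV. \<Sum>l\<in>UNIV. D j k l i * Pm l k)) + ((\<Sum>k\<in>UNIV. \<Sum>l\<in>UNIV. G k l i * Wm l j k)) + ((\<Sum>k\<in>UNIV. \<Sum>l\<in>UNIV. D j k k l * Pm l i)) + ((\<Sum>k\<in>UNIV. \<Sum>l\<in>UNIV. G k k l * Wm l j i)) + ((\<Sum>k\<in>UNIV. \<Sum>l\<in>UNIV. Pm l j * D l k k i)) + (-(\<Sum>k\<in>UNIV. \<Sum>p\<in>UNIV. Wm k k p * G p i j)) + ((\<Sum>k\<in>UNIV. \<Sum>p\<in>UNIV. \<Sum>l\<in>UNIV. G l k p * Pm k l * G p i j)) + (-(\<Sum>k\<in>UNIV. \<Sum>p\<in>UNIV. \<Sum>l\<in>UNIV. G k l p * Pm l k * G p i j)) + (-(\<Sum>k\<in>UNIV. \<Sum>p\<in>UNIV. \<Sum>l\<in>UNIV. G k k l * Pm l p * G p i j)) + (-(\<Sum>k\<in>UNIV. \<Sum>p\<in>UNIV. G k k p * Wm p i j)) + ((\<Sum>k\<in>UNIV. \<Sum>p\<in>UNIV. \<Sum>l\<in>UNIV. G k k p * (G l i j * Pm p l))) + (-(\<Sum>k\<in>UNIV. \<Sum>p\<in>UNIV. \<Sum>l\<in>UNIV. G k k p * (G p l j * Pm l i))) + (-(\<Sum>k\<in>UNIV.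 \<Sum>p\<in>UNIV. \<Sum>l\<in>UNIV. G k k p * (G p i l * Pm l j))) + ((\<Sum>k\<in>UNIV. \<Sum>p\<in>UNIV. Wm k j p * G p k i)) + (-(\<Sum>k\<in>UNIV. \<Sum>p\<in>UNIV. \<Sum>l\<in>UNIV. G l j p * Pm k l * G p k i)) + ((\<Sum>k\<in>UNIV. \<Sum>p\<in>UNIV. \<Sum>l\<in>UNIV. G k l p * Pm l j * G p k i)) + ((\<Sum>k\<in>UNIV. \<Sum>p\<in>UNIV. \<Sum>l\<in>UNIV. G k j l * Pm l p * G p k i)) + ((\<Sum>k\<in>UNIV. \<Sum>p\<in>UNIV. G k j p * Wm p k i)) + (-(\<Sum>k\<in>UNIV. \<Sum>p\<in>UNIV. \<Sum>l\<in>UNIV. G k j p * (G l k i * Pm p l))) + ((\<Sum>k\<in>UNIV. \<Sum>p\<in>UNIV. \<Sum>l\<in>UNIV. G k j p * (G p l i * Pm l k))) + ((\<Sum>k\<in>UNIV. \<Sum>p\<in>UNIV. \<Sum>l\<in>UNIV. G k j p * (G p k l * Pm l i))) + ((\<Sum>l\<in>UNIV. \<Sum>k\<in>UNIV. Pm l i * D k k l j)) + (-(\<Sum>l\<in>UNIV. \<Sum>k\<in>UNIV. Pm l i * D j k k l)) + ((\<Sum>l\<in>UNIV. \<Sum>k\<in>UNIV. \<Sum>p\<in>UNIV. Pm l i * (G k k p * G p l j))) + (-(\<Sum>l\<in>UNIV. \<Sum>k\<in>UNIV. \<Sum>p\<in>UNIV. Pm l i * (G k j p * G p k l))) + ((\<Sum>l\<in>UNIV.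 \<Sum>k\<in>UNIV. Pm l j * D k k i l)) + (-(\<Sum>l\<in>UNIV. \<Sum>k\<in>UNIV. Pm l j * D l k k i)) + ((\<Sum>l\<in>UNIV. \<Sum>k\<in>UNIV. \<Sum>p\<in>UNIV. Pm l j * (G k k p * G p i l))) + (-(\<Sum>l\<in>UNIV. \<Sum>k\<in>UNIV. \<Sum>p\<in>UNIV. Pm l j * (G k l p * G p k i))) = 0"
    by (simp add: sum.distrib sum_subtractf sum_distrib_left sum_distrib_right sum_negf algebra_simps)
  have p_A1_B1: "(\<Sum>k\<in>UNIV. T k i k j) = (\<Sum>k\<in>UNIV. T j k k i)"
    using Ts by simp
  have p_A3_C1: "(\<Sum>k\<in>UNIV. \<Sum>l\<in>UNIV. G l i j * Wm k k l) = (\<Sum>k\<in>UNIV. \<Sum>p\<in>UNIV. Wm k k p * G p i j)"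
    by (simp add: mult.commute)
  have p_A5_C13: "(\<Sum>k\<in>UNIV. \<Sum>l\<in>UNIV. G k l j * Wm l k i) = (\<Sum>k\<in>UNIV. \<Sum>p\<in>UNIV. G k j p * Wm p k i)"
    by (intro sum.cong refl) (simp add: Gs[of _ j])
  have p_A7_C9: "(\<Sum>k\<in>UNIV. \<Sum>l\<in>UNIV. G k i l * Wm l k j) = (\<Sum>k\<in>UNIV. \<Sum>p\<in>UNIV. Wm k j p * G p k i)"
    by (rule trans[OF _ sum.swap[of "\<lambda>k p. Wm k j p * G p k i", symmetric]]) (simp add: Gs[of _ i] Ws[of _ _ j] mult_ac)
  have p_B3_B5: "(\<Sum>k\<in>UNIV. \<Sum>l\<in>UNIV. G l k i * Wm k j l) = (\<Sum>k\<in>UNIV. \<Sum>l\<in>UNIV. G k l i * Wm l j k)"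
    by (rule sum.swap)
  have p_B7_C5: "(\<Sum>k\<in>UNIV. \<Sum>l\<in>UNIV. G k k l * Wm l j i) = (\<Sum>k\<in>UNIV. \<Sum>p\<in>UNIV. G k k p * Wm p i j)"
    by (intro sum.cong refl) (simp add: Ws[of _ j i])
  have p_A2_A8: "(\<Sum>k\<in>UNIV. \<Sum>l\<in>UNIV. D k l i j * Pm k l) = (\<Sum>k\<in>UNIV. \<Sum>l\<in>UNIV. Pm l k * D l k i j)"
    by (rule trans[OF _ sum.swap[of "\<lambda>k l. Pm l k * D l k i j", symmetric]]) (simp add: mult_ac)
  have p_A4_E1: "(\<Sum>k\<in>UNIV. \<Sum>l\<in>UNIV. D k k l j * Pm l i) = (\<Sum>l\<in>UNIV. \<Sum>k\<in>UNIV. Pm l i * D k k l j)"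
    by (rule trans[OF _ sum.swap[of "\<lambda>l k. Pm l i * D k k l j", symmetric]]) (simp add: mult_ac)
  have p_A6_F1: "(\<Sum>k\<in>UNIV. \<Sum>l\<in>UNIV. D k k i l * Pm l j) = (\<Sum>l\<in>UNIV. \<Sum>k\<in>UNIV. Pm l j * D k k i l)"
    by (rule trans[OF _ sum.swap[of "\<lambda>l k. Pm l j * D k k i l", symmetric]]) (simp add: mult_ac)
  have p_B2_B4: "(\<Sum>k\<in>UNIV. \<Sum>l\<in>UNIV. D j l k i * Pm k l) = (\<Sum>k\<in>UNIV. \<Sum>l\<in>UNIV. D j k l i * Pm l k)"
    by (rule sum.swap)
  have p_B6_E2: "(\<Sum>k\<in>UNIV. \<Sum>l\<in>UNIV. D j k k l * Pm l i) = (\<Sum>l\<in>UNIV. \<Sum>k\<in>UNIV. Pm l i * D j k k l)"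
    by (rule trans[OF _ sum.swap[of "\<lambda>l k. Pm l i * D j k k l", symmetric]]) (simp add: mult_ac)
  have p_B8_F2: "(\<Sum>k\<in>UNIV. \<Sum>l\<in>UNIV. Pm l j * D l k k i) = (\<Sum>l\<in>UNIV. \<Sum>k\<in>UNIV. Pm l j * D l k k i)"
    by (rule sum.swap)
  have p_C4_C6: "(\<Sum>k\<in>UNIV. \<Sum>p\<in>UNIV. \<Sum>l\<in>UNIV. G k k l * Pm l p * G p i j) = (\<Sum>k\<in>UNIV. \<Sum>p\<in>UNIV. \<Sum>l\<in>UNIV. G k k p * (G l i j * Pm p l))"
    by (rule trans[OF _ s3_inner[of "\<lambda>k p l. G k k p * (G l i j * Pm p l)", symmetric]]) (simp add: mult_ac)
  have p_C7_E3: "(\<Sum>k\<in>UNIV. \<Sum>p\<in>UNIV. \<Sum>l\<in>UNIV. G k k p * (G p l j * Pm l i)) = (\<Sum>l\<in>UNIV. \<Sum>k\<in>UNIV. \<Sum>p\<in>UNIV. Pm l i * (G k k p * G p l j))"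
    by (rule trans[OF s3_312[of "\<lambda>k p l. G k k p * (G p l j * Pm l i)"]]) (simp add: mult_ac)
  have p_C8_F3: "(\<Sum>k\<in>UNIV. \<Sum>p\<in>UNIV. \<Sum>l\<in>UNIV. G k k p * (G p i l * Pm l j)) = (\<Sum>l\<in>UNIV. \<Sum>k\<in>UNIV. \<Sum>p\<in>UNIV. Pm l j * (G k k p * G p i l))"
    by (rule trans[OF s3_312[of "\<lambda>k p l. G k k p * (G p i l * Pm l j)"]]) (simp add: mult_ac)
  have p_C11_F4: "(\<Sum>k\<in>UNIV. \<Sum>p\<in>UNIV. \<Sum>l\<in>UNIV. G k l p * Pm l j * G p k i) = (\<Sum>l\<in>UNIV. \<Sum>k\<in>UNIV. \<Sum>p\<in>UNIV. Pm l j * (G k l p * G p k i))"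
    by (rule trans[OF s3_312[of "\<lambda>k p l. G k l p * Pm l j * G p k i"]]) (simp add: mult_ac)
  have p_C16_E4: "(\<Sum>k\<in>UNIV. \<Sum>p\<in>UNIV. \<Sum>l\<in>UNIV. G k j p * (G p k l * Pm l i)) = (\<Sum>l\<in>UNIV. \<Sum>k\<in>UNIV. \<Sum>p\<in>UNIV. Pm l i * (G k j p * G p k l))"
    by (rule trans[OF s3_312[of "\<lambda>k p l. G k j p * (G p k l * Pm l i)"]]) (simp add: mult_ac)
  have p_C2_C3: "(\<Sum>k\<in>UNIV. \<Sum>p\<in>UNIV. \<Sum>l\<in>UNIV. G l k p * Pm k l * G p i j) = (\<Sum>k\<in>UNIV. \<Sum>p\<in>UNIV. \<Sum>l\<in>UNIV. G k l p * Pm l k * G p i j)"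
    by (rule trans[OF _ s3_13[of "\<lambda>k p l. G k l p * Pm l k * G p i j", symmetric]]) (simp add: mult_ac)
  have p_C10_C15: "(\<Sum>k\<in>UNIV. \<Sum>p\<in>UNIV. \<Sum>l\<in>UNIV. G l j p * Pm k l * G p k i) = (\<Sum>k\<in>UNIV. \<Sum>p\<in>UNIV. \<Sum>l\<in>UNIV. G k j p * (G p l i * Pm l k))"
    by (rule trans[OF _ s3_13[of "\<lambda>k p l. G k j p * (G p l i * Pm l k)", symmetric]]) (simp add: mult_ac)
  have p_C12_C14: "(\<Sum>k\<in>UNIV. \<Sum>p\<in>UNIV. \<Sum>l\<in>UNIV. G k j l * Pm l p * G p k i) = (\<Sum>k\<in>UNIV. \<Sum>p\<in>UNIV. \<Sum>l\<in>UNIV. G k j p * (G l k i * Pm p l))"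
    by (rule trans[OF _ s3_inner[of "\<lambda>k p l. G k j p * (G l k i * Pm p l)", symmetric]]) (simp add: mult_ac)
  show ?thesis unfolding expand using p_A1_B1 p_A3_C1 p_A5_C13 p_A7_C9 p_B3_B5 p_B7_C5 p_A2_A8 p_A4_E1 p_A6_F1 p_B2_B4 p_B6_E2 p_B8_F2 p_C4_C6 p_C7_E3 p_C8_F3 p_C11_F4 p_C16_E4 p_C2_C3 p_C10_C15 p_C12_C14 by linarith
qed

context sol
begin

lemma sm_Phi[simp]: "smooth_on U (Phi k i j)"
proof -
  have "Phi k i j = (\<lambda>y. - pd i (P k j) y + (\<Sum>l\<in>UNIV. \<Gamma> l i j y * P k l y - \<Gamma> k l j y * P l i y - \<Gamma> k i l y * P l j y))"
    by (rule ext) (simp add: Phi_def)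
  moreover have "smooth_on U (\<lambda>y. - pd i (P k j) y + (\<Sum>l\<in>UNIV. \<Gamma> l i j y * P k l y - \<Gamma> k l j y * P l i y - \<Gamma> k i l y * P l j y))"
    by simp
  ultimately show ?thesis by simp
qed

lemma dPhi: "x \<in> U \<Longrightarrow> pd m (Phi k q r) x = - pd m (pd q (P k r)) x + (\<Sum>l\<in>UNIV. pd m (\<Gamma> l q r) x * P k l x + \<Gamma> l q r x * pd m (P k l) x
   - (pd m (\<Gamma> k l r) x * P l q x + \<Gamma> k l r x * pd m (P l q) x) - (pd m (\<Gamma> k q l) x * P l r x + \<Gamma> k q l x * pd m (P l r) x))"
proof -
  assume x: "x \<in> U"
  have "Phi k q r = (\<lambda>y. - pd q (P k r) y + (\<Sum>l\<in>UNIV. \<Gamma> l q r y * P k l y - \<Gamma> k l r y * P l q y - \<Gamma> k q l y * P l r y))"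
    by (rule ext) (simp add: Phi_def)
  then show ?thesis using x by simp
qed

lemma Vdd: "x \<in> U \<Longrightarrow> (\<Sum>l\<in>UNIV. V x $ l * pd l (pd m (\<Gamma> k q r)) x) = pd m (Phi k q r) x - (\<Sum>l\<in>UNIV. P l m x * pd l (\<Gamma> k q r) x)"
proof -
  assume x: "x \<in> U"
  have "pd m (Phi k q r) x = pd m (\<lambda>y. \<Sum>l\<in>UNIV. V y $ l * pd l (\<Gamma> k q r) y) x"
    by (rule pd_local[OF opU x]) (simp add: Lam)
  also have "\<dots> = (\<Sum>l\<in>UNIV. P l m x * pd l (\<Gamma> k q r) x + V x $ l * pd m (pd l (\<Gamma> k q r)) x)"
    using x by simp
  also have "\<dots> = (\<Sum>l\<in>UNIV. P l m x * pd l (\<Gamma> k q r) x) + (\<Sum>l\<in>UNIV. V x $ l * pd l (pd m (\<Gamma> k q r)) x)"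
    by (simp add: sum.distrib schwarz_smooth[OF opU x sm_chr])
  finally show ?thesis by simp
qed

lemma ricci_fun: "ricci g i j = (\<lambda>x. \<Sum>k\<in>UNIV. pd k (\<Gamma> k i j) x - pd j (\<Gamma> k k i) x
      + (\<Sum>p\<in>UNIV. \<Gamma> k k p x * \<Gamma> p i j x - \<Gamma> k j p x * \<Gamma> p k i x))"
  by (rule ext) (simp add: ricci_def)

lemma sm_ricci[simp]: "smooth_on U (ricci g i j)"
  unfolding ricci_fun by simp

lemma VY: "x \<in> U \<Longrightarrow> (\<Sum>l\<in>UNIV. V x $ l * (pd l (\<Gamma> k k p) x * \<Gamma> p i j x + \<Gamma> k k p x * pd l (\<Gamma> p i j) x
         - (pd l (\<Gamma> k j p) x * \<Gamma> p k i x + \<Gamma> k j p x * pd l (\<Gamma> p k i) x)))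
  = Phi k k p x * \<Gamma> p i j x + \<Gamma> k k p x * Phi p i j x - Phi k j p x * \<Gamma> p k i x - \<Gamma> k j p x * Phi p k i x"
proof -
  assume x: "x \<in> U"
  have "(\<Sum>l\<in>UNIV. V x $ l * (pd l (\<Gamma> k k p) x * \<Gamma> p i j x + \<Gamma> k k p x * pd l (\<Gamma> p i j) x
         - (pd l (\<Gamma> k j p) x * \<Gamma> p k i x + \<Gamma> k j p x * pd l (\<Gamma> p k i) x)))
     = (\<Sum>l\<in>UNIV. V x $ l * pd l (\<Gamma> k k p) x) * \<Gamma> p i j x + \<Gamma> k k p x * (\<Sum>l\<in>UNIV. V x $ l * pd l (\<Gamma> p i j) x)
       - (\<Sum>l\<in>UNIV. V x $ l * pd l (\<Gamma> k j p) x) * \<Gamma> p k i x - \<Gamma> k j p x * (\<Sum>l\<in>UNIV. V x $ l * pd l (\<Gamma> p k i) x)"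
    by (simp add: sum_distrib_left sum_distrib_right sum.distrib sum_subtractf algebra_simps)
  then show ?thesis by (simp add: Lam[OF x])
qed

lemma dR: "x \<in> U \<Longrightarrow> (\<Sum>l\<in>UNIV. V x $ l * pd l (ricci g i j) x) =
    (\<Sum>k\<in>UNIV. pd k (Phi k i j) x) - (\<Sum>k\<in>UNIV. \<Sum>l\<in>UNIV. P l k x * pd l (\<Gamma> k i j) x)
  - ((\<Sum>k\<in>UNIV. pd j (Phi k k i) x) - (\<Sum>k\<in>UNIV. \<Sum>l\<in>UNIV. P l j x * pd l (\<Gamma> k k i) x))
  + (\<Sum>k\<in>UNIV. \<Sum>p\<in>UNIV. Phi k k p x * \<Gamma> p i j x + \<Gamma> k k p x * Phi p i j x - Phi k j p x * \<Gamma> p k i x - \<Gamma> k j p x * Phi p k i x)"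
proof -
  assume x: "x \<in> U"
  define Y where "Y k p l = pd l (\<Gamma> k k p) x * \<Gamma> p i j x + \<Gamma> k k p x * pd l (\<Gamma> p i j) x
         - (pd l (\<Gamma> k j p) x * \<Gamma> p k i x + \<Gamma> k j p x * pd l (\<Gamma> p k i) x)" for k p l
  have "(\<Sum>l\<in>UNIV. V x $ l * pd l (ricci g i j) x) = (\<Sum>l\<in>UNIV. \<Sum>k\<in>UNIV. V x $ l * (pd l (pd k (\<Gamma> k i j)) x - pd l (pd j (\<Gamma> k k i)) x
      + (\<Sum>p\<in>UNIV. Y k p l)))"
    unfolding ricci_fun Y_def using x by (simp add: sum_distrib_left)
  also have "\<dots> = (\<Sum>k\<in>UNIV. \<Sum>l\<in>UNIV. V x $ l * (pd l (pd k (\<Gamma> k i j)) x - pd l (pd j (\<Gamma> k k i)) x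
      + (\<Sum>p\<in>UNIV. Y k p l)))" by (rule sum.swap)
  also have "\<dots> = (\<Sum>k\<in>UNIV. (pd k (Phi k i j) x - (\<Sum>l\<in>UNIV. P l k x * pd l (\<Gamma> k i j) x))
       - (pd j (Phi k k i) x - (\<Sum>l\<in>UNIV. P l j x * pd l (\<Gamma> k k i) x))
       + (\<Sum>p\<in>UNIV. Phi k k p x * \<Gamma> p i j x + \<Gamma> k k p x * Phi p i j x - Phi k j p x * \<Gamma> p k i x - \<Gamma> k j p x * Phi p k i x))"
  proof (rule sum.cong[OF refl])
    fix k
    have "(\<Sum>l\<in>UNIV. V x $ l * (pd l (pd k (\<Gamma> k i j)) x - pd l (pd j (\<Gamma> k k i)) x + (\<Sum>p\<in>UNIV. Y k p l)))
       = (\<Sum>l\<in>UNIV. V x $ l * pd l (pd k (\<Gamma> k i j)) x) - (\<Sum>l\<in>UNIV. V x $ l * pd l (pd j (\<Gamma> k k i)) x)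
         + (\<Sum>l\<in>UNIV. \<Sum>p\<in>UNIV. V x $ l * Y k p l)"
      by (simp add: sum_distrib_left sum.distrib sum_subtractf algebra_simps)
    also have "(\<Sum>l\<in>UNIV. \<Sum>p\<in>UNIV. V x $ l * Y k p l) = (\<Sum>p\<in>UNIV. \<Sum>l\<in>UNIV. V x $ l * Y k p l)" by (rule sum.swap)
    also have "\<dots> = (\<Sum>p\<in>UNIV. Phi k k p x * \<Gamma> p i j x + \<Gamma> k k p x * Phi p i j x - Phi k j p x * \<Gamma> p k i x - \<Gamma> k j p x * Phi p k i x)"
      unfolding Y_def by (simp add: VY[OF x])
    finally show "(\<Sum>l\<in>UNIV. V x $ l * (pd l (pd k (\<Gamma> k i j)) x - pd l (pd j (\<Gamma> k k i)) x + (\<Sum>p\<in>UNIV. Y k p l)))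
       = (pd k (Phi k i j) x - (\<Sum>l\<in>UNIV. P l k x * pd l (\<Gamma> k i j) x))
       - (pd j (Phi k k i) x - (\<Sum>l\<in>UNIV. P l j x * pd l (\<Gamma> k k i) x))
       + (\<Sum>p\<in>UNIV. Phi k k p x * \<Gamma> p i j x + \<Gamma> k k p x * Phi p i j x - Phi k j p x * \<Gamma> p k i x - \<Gamma> k j p x * Phi p k i x)"
      by (simp add: Vdd[OF x])
  qed
  also have "\<dots> = (\<Sum>k\<in>UNIV. pd k (Phi k i j) x) - (\<Sum>k\<in>UNIV. \<Sum>l\<in>UNIV. P l k x * pd l (\<Gamma> k i j) x)
  - ((\<Sum>k\<in>UNIV. pd j (Phi k k i) x) - (\<Sum>k\<in>UNIV. \<Sum>l\<in>UNIV. P l j x * pd l (\<Gamma> k k i) x))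
  + (\<Sum>k\<in>UNIV. \<Sum>p\<in>UNIV. Phi k k p x * \<Gamma> p i j x + \<Gamma> k k p x * Phi p i j x - Phi k j p x * \<Gamma> p k i x - \<Gamma> k j p x * Phi p k i x)"
    by (simp add: sum.distrib sum_subtractf)
  finally show ?thesis .
qed

lemma Ws: "x \<in> U \<Longrightarrow> pd q (P k r) x = pd r (P k q) x"
  by (rule schwarz_smooth[OF opU _ sm_V])

lemma Ts: "x \<in> U \<Longrightarrow> pd k (pd i (P k j)) x = pd j (pd k (P k i)) x"
proof -
  assume x: "x \<in> U"
  have "pd k (pd i (P k j)) x = pd k (pd j (P k i)) x"
    by (rule pd_local[OF opU x]) (rule schwarz_smooth[OF opU _ sm_V])
  also have "\<dots> = pd j (pd k (P k i)) x" by (rule schwarz_smooth[OF opU x]) simp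
  finally show ?thesis .
qed

lemma E_identity: "x \<in> U \<Longrightarrow> (\<Sum>l\<in>UNIV. V x $ l * pd l (ricci g i j) x) + (\<Sum>l\<in>UNIV. P l i x * ricci g l j x)
   + (\<Sum>l\<in>UNIV. P l j x * ricci g i l x) = 0"
proof -
  assume x: "x \<in> U"
  have BI: "(\<Sum>k\<in>UNIV. - pd k (pd i (P k j)) x + (\<Sum>l\<in>UNIV. pd k (\<Gamma> l i j) x * P k l x + \<Gamma> l i j x * pd k (P k l) x - (pd k (\<Gamma> k l j) x * P l i x + \<Gamma> k l j x * pd k (P l i) x) - (pd k (\<Gamma> k i l) x * P l j x + \<Gamma> k i l x * pd k (P l j) x)))
     - (\<Sum>k\<in>UNIV. \<Sum>l\<in>UNIV. P l k x * pd l (\<Gamma> k i j) x)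
     - ((\<Sum>k\<in>UNIV. - pd j (pd k (P k i)) x + (\<Sum>l\<in>UNIV. pd j (\<Gamma> l k i) x * P k l x + \<Gamma> l k i x * pd j (P k l) x - (pd j (\<Gamma> k l i) x * P l k x + \<Gamma> k l i x * pd j (P l k) x) - (pd j (\<Gamma> k k l) x * P l i x + \<Gamma> k k l x * pd j (P l i) x)))
        - (\<Sum>k\<in>UNIV. \<Sum>l\<in>UNIV. P l j x * pd l (\<Gamma> k k i) x))
     + (\<Sum>k\<in>UNIV. \<Sum>p\<in>UNIV.
          (- pd k (P k p) x + (\<Sum>l\<in>UNIV. \<Gamma> l k p x * P k l x - \<Gamma> k l p x * P l k x - \<Gamma> k k l x * P l p x)) * \<Gamma> p i j x
        + \<Gamma> k k p x * (- pd i (P p j) x + (\<Sum>l\<in>UNIV. \<Gamma> l i j x * P p l x - \<Gamma> p l j x * P l i x - \<Gamma> p i l x * P l j x))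
        - (- pd j (P k p) x + (\<Sum>l\<in>UNIV. \<Gamma> l j p x * P k l x - \<Gamma> k l p x * P l j x - \<Gamma> k j l x * P l p x)) * \<Gamma> p k i x
        - \<Gamma> k j p x * (- pd k (P p i) x + (\<Sum>l\<in>UNIV. \<Gamma> l k i x * P p l x - \<Gamma> p l i x * P l k x - \<Gamma> p k l x * P l i x)))
     + (\<Sum>l\<in>UNIV. P l i x * (\<Sum>k\<in>UNIV. pd k (\<Gamma> k l j) x - pd j (\<Gamma> k k l) x + (\<Sum>p\<in>UNIV. \<Gamma> k k p x * \<Gamma> p l j x - \<Gamma> k j p x * \<Gamma> p k l x)))
     + (\<Sum>l\<in>UNIV. P l j x * (\<Sum>k\<in>UNIV. pd k (\<Gamma> k i l) x - pd l (\<Gamma> k k i) x + (\<Sum>p\<in>UNIV. \<Gamma> k k p x * \<Gamma> p i l x - \<Gamma> k l p x * \<Gamma> p k i x)))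
     = 0"
    by (rule big_identity[where G="\<lambda>k a b. \<Gamma> k a b x" and D="\<lambda>m k a b. pd m (\<Gamma> k a b) x"
          and T="\<lambda>m a k b. pd m (pd a (P k b)) x" and Pm="\<lambda>l k. P l k x" and Wm="\<lambda>k a b. pd a (P k b) x"])
       (use chr_sym[OF x] Ws[OF x] Ts[OF x] in auto)
  show ?thesis
    unfolding dR[OF x] dPhi[OF x] Phi_def ricci_def using BI by simp
qed

end

lemma sum_delta_a: "(\<Sum>k\<in>(UNIV::'n::finite set). f k * (a * (if i = k then 1 else 0))) = a * (f i::real)"
proof -
  have "(\<Sum>k\<in>(UNIV::'n set). f k * (a * (if i = k then 1 else 0))) = (\<Sum>k\<in>(UNIV::'n set). if i = k then a * f k else 0)"
    by (rule sum.cong) auto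
  then show ?thesis by simp
qed

context sol
begin

abbreviation eta :: "'n \<Rightarrow> real^'n \<Rightarrow> real" where "eta \<equiv> dual_form g V"

lemma eta_fun: "eta i = (\<lambda>y. \<Sum>j\<in>UNIV. g y $ i $ j * V y $ j)"
  by (rule ext) (simp add: dual_form_def)

lemma sm_eta[simp]: "smooth_on U (eta i)"
  unfolding eta_fun by simp

lemma lieg: "x \<in> U \<Longrightarrow> lie_deriv_metric g V i j x = 2 * a * g x $ i $ j"
proof -
  assume x: "x \<in> U"
  have A: "(\<Sum>k\<in>UNIV. V x $ k * dg k i j x) = (\<Sum>k\<in>UNIV. \<Sum>l\<in>UNIV. V x $ k * (g x $ l $ j * \<Gamma> l k i x))
      + (\<Sum>k\<in>UNIV. \<Sum>l\<in>UNIV. V x $ k * (g x $ i $ l * \<Gamma> l k j x))"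
    by (simp add: compat[OF x] sum_distrib_left distrib_left sum.distrib)
  have B: "(\<Sum>k\<in>UNIV. g x $ k $ j * P k i x) = a * g x $ i $ j - (\<Sum>k\<in>UNIV. \<Sum>m\<in>UNIV. g x $ k $ j * \<Gamma> k i m x * V x $ m)"
    by (simp add: dV[OF x] right_diff_distrib sum_subtractf sum_distrib_left mult.assoc sum_delta_a)
  have C: "(\<Sum>k\<in>UNIV. g x $ i $ k * P k j x) = a * g x $ i $ j - (\<Sum>k\<in>UNIV. \<Sum>m\<in>UNIV. g x $ i $ k * \<Gamma> k j m x * V x $ m)"
    by (simp add: dV[OF x] right_diff_distrib sum_subtractf sum_distrib_left mult.assoc sum_delta_a gsym[OF x, of j i])
  have B': "(\<Sum>k\<in>UNIV. \<Sum>l\<in>UNIV. V x $ k * (g x $ l $ j * \<Gamma> l k i x)) = (\<Sum>k\<in>UNIV. \<Sum>m\<in>UNIV. g x $ k $ j * \<Gamma> k i m x * V x $ m)"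
    by (subst sum.swap) (simp add: chr_sym[OF x, of _ i] mult_ac)
  have C': "(\<Sum>k\<in>UNIV. \<Sum>l\<in>UNIV. V x $ k * (g x $ i $ l * \<Gamma> l k j x)) = (\<Sum>k\<in>UNIV. \<Sum>m\<in>UNIV. g x $ i $ k * \<Gamma> k j m x * V x $ m)"
    by (subst sum.swap) (simp add: chr_sym[OF x, of _ j] mult_ac)
  have "lie_deriv_metric g V i j x = (\<Sum>k\<in>UNIV. V x $ k * dg k i j x) + (\<Sum>k\<in>UNIV. g x $ k $ j * P k i x) + (\<Sum>k\<in>UNIV. g x $ i $ k * P k j x)"
    unfolding lie_deriv_metric_def by (simp add: sum.distrib)
  then show ?thesis using A B C B' C' by simp
qed

lemma Leta: "x \<in> U \<Longrightarrow> (\<Sum>l\<in>UNIV. V x $ l * pd l (eta i) x) + (\<Sum>l\<in>UNIV. P l i x * eta l x) = 2 * a * eta i x"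
proof -
  assume x: "x \<in> U"
  have d: "pd l (eta i) x = (\<Sum>j\<in>UNIV. dg l i j x * V x $ j + g x $ i $ j * P j l x)" for l
    unfolding eta_fun using x by simp
  have L: "(\<Sum>l\<in>UNIV. V x $ l * dg l i j x) + (\<Sum>l\<in>UNIV. P l i x * g x $ l $ j) = 2 * a * g x $ i $ j - (\<Sum>l\<in>UNIV. P l j x * g x $ i $ l)" for j
    using lieg[OF x, of i j] unfolding lie_deriv_metric_def by (simp add: sum.distrib mult_ac)
  have "(\<Sum>l\<in>UNIV. V x $ l * pd l (eta i) x) + (\<Sum>l\<in>UNIV. P l i x * eta l x)
     = (\<Sum>j\<in>UNIV. V x $ j * ((\<Sum>l\<in>UNIV. V x $ l * dg l i j x) + (\<Sum>l\<in>UNIV. P l i x * g x $ l $ j)))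
       + (\<Sum>l\<in>UNIV. \<Sum>j\<in>UNIV. V x $ l * (g x $ i $ j * P j l x))"
  proof -
    have "(\<Sum>l\<in>UNIV. V x $ l * pd l (eta i) x) = (\<Sum>l\<in>UNIV. \<Sum>j\<in>UNIV. V x $ l * (dg l i j x * V x $ j))
       + (\<Sum>l\<in>UNIV. \<Sum>j\<in>UNIV. V x $ l * (g x $ i $ j * P j l x))"
      by (simp add: d sum_distrib_left distrib_left sum.distrib)
    moreover have "(\<Sum>l\<in>UNIV. \<Sum>j\<in>UNIV. V x $ l * (dg l i j x * V x $ j)) = (\<Sum>j\<in>UNIV. V x $ j * (\<Sum>l\<in>UNIV. V x $ l * dg l i j x))"
      by (subst sum.swap) (simp add: sum_distrib_left mult_ac)
    moreover have "(\<Sum>l\<in>UNIV. P l i x * eta l x) = (\<Sum>j\<in>UNIV. V x $ j * (\<Sum>l\<in>UNIV. P l i x * g x $ l $ j))"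
    proof -
      have "(\<Sum>l\<in>UNIV. P l i x * eta l x) = (\<Sum>l\<in>UNIV. \<Sum>j\<in>UNIV. V x $ j * (P l i x * g x $ l $ j))"
        unfolding dual_form_def by (simp add: sum_distrib_left mult_ac)
      also have "\<dots> = (\<Sum>j\<in>UNIV. \<Sum>l\<in>UNIV. V x $ j * (P l i x * g x $ l $ j))" by (rule sum.swap)
      finally show ?thesis by (simp add: sum_distrib_left)
    qed
    ultimately show ?thesis by (simp add: distrib_left sum.distrib)
  qed
  also have "\<dots> = (\<Sum>j\<in>UNIV. V x $ j * (2 * a * g x $ i $ j)) - (\<Sum>j\<in>UNIV. V x $ j * (\<Sum>l\<in>UNIV. P l j x * g x $ i $ l))
       + (\<Sum>l\<in>UNIV. \<Sum>j\<in>UNIV. V x $ l * (g x $ i $ j * P j l x))"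
    by (simp add: L right_diff_distrib sum_subtractf)
  also have "(\<Sum>j\<in>UNIV. V x $ j * (\<Sum>l\<in>UNIV. P l j x * g x $ i $ l)) = (\<Sum>l\<in>UNIV. \<Sum>j\<in>UNIV. V x $ l * (g x $ i $ j * P j l x))"
    by (simp add: sum_distrib_left mult_ac)
  also have "(\<Sum>j\<in>UNIV. V x $ j * (2 * a * g x $ i $ j)) = 2 * a * eta i x"
    unfolding dual_form_def by (simp add: sum_distrib_left mult_ac)
  finally show ?thesis by simp
qed

lemma ricci_K: "x \<in> U \<Longrightarrow> ricci g m j x = (\<Sum>k\<in>UNIV. K k k j m x)"
proof -
  assume x: "x \<in> U"
  show ?thesis unfolding ricci_def K_def
  proof (rule sum.cong[OF refl])
    fix k
    have "pd k (\<Gamma> k m j) x = pd k (\<Gamma> k j m) x" by (rule dsym[OF x])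
    moreover have "(\<Sum>p\<in>UNIV. \<Gamma> k k p x * \<Gamma> p m j x - \<Gamma> k j p x * \<Gamma> p k m x) = (\<Sum>l\<in>UNIV. \<Gamma> k k l x * \<Gamma> l j m x - \<Gamma> k j l x * \<Gamma> l k m x)"
      by (rule sum.cong[OF refl]) (simp add: chr_sym[OF x, of _ m j])
    ultimately show "pd k (\<Gamma> k m j) x - pd j (\<Gamma> k k m) x + (\<Sum>p\<in>UNIV. \<Gamma> k k p x * \<Gamma> p m j x - \<Gamma> k j p x * \<Gamma> p k m x)
      = pd k (\<Gamma> k j m) x - pd j (\<Gamma> k k m) x + (\<Sum>l\<in>UNIV. \<Gamma> k k l x * \<Gamma> l j m x - \<Gamma> k j l x * \<Gamma> l k m x)"
      by simp
  qed
qed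

lemma RicV: "x \<in> U \<Longrightarrow> (\<Sum>m\<in>UNIV. V x $ m * ricci g m j x) = 0"
proof -
  assume x: "x \<in> U"
  have "(\<Sum>m\<in>UNIV. V x $ m * ricci g m j x) = (\<Sum>k\<in>UNIV. \<Sum>m\<in>UNIV. V x $ m * K k k j m x)"
    by (simp add: ricci_K[OF x] sum_distrib_left) (rule sum.swap)
  also have "\<dots> = 0" by (simp add: F4[OF x])
  finally show ?thesis .
qed

end

context sol
begin

lemma tr_g: "y \<in> U \<Longrightarrow> (\<Sum>i\<in>UNIV. \<Sum>j\<in>UNIV. ginv g i j y * g y $ i $ j) = real CARD('n)"
proof -
  assume y: "y \<in> U"
  have "(\<Sum>i\<in>UNIV. \<Sum>j\<in>UNIV. ginv g i j y * g y $ i $ j) = (\<Sum>i\<in>(UNIV::'n set). \<Sum>j\<in>UNIV. ginv g i j y * g y $ j $ i)"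
    using gsym[OF y] by simp
  also have "\<dots> = (\<Sum>i\<in>(UNIV::'n set). 1)" by (simp add: ginv_g[OF y])
  finally show ?thesis by simp
qed

lemma tr_eta: "y \<in> U \<Longrightarrow> (\<Sum>i\<in>UNIV. \<Sum>j\<in>UNIV. ginv g i j y * (eta i y * eta j y)) = (\<Sum>i\<in>UNIV. V y $ i * eta i y)"
proof -
  assume y: "y \<in> U"
  have "(\<Sum>j\<in>UNIV. ginv g i j y * eta j y) = V y $ i" for i
  proof -
    have "(\<Sum>j\<in>UNIV. ginv g i j y * eta j y) = (\<Sum>j\<in>UNIV. \<Sum>m\<in>UNIV. ginv g i j y * g y $ j $ m * V y $ m)"
      unfolding dual_form_def by (simp add: sum_distrib_left mult.assoc)
    also have "\<dots> = (\<Sum>m\<in>UNIV. (\<Sum>j\<in>UNIV. ginv g i j y * g y $ j $ m) * V y $ m)"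
      by (subst sum.swap) (simp add: sum_distrib_right)
    also have "\<dots> = V y $ i" by (simp add: ginv_g[OF y] sum_delta_l)
    finally show ?thesis .
  qed
  then have "(\<Sum>i\<in>UNIV. eta i y * (\<Sum>j\<in>UNIV. ginv g i j y * eta j y)) = (\<Sum>i\<in>UNIV. V y $ i * eta i y)"
    by (simp add: mult.commute)
  then show ?thesis by (simp add: sum_distrib_left mult_ac)
qed

lemma f_pos: "y \<in> U \<Longrightarrow> V y \<noteq> 0 \<Longrightarrow> (\<Sum>i\<in>UNIV. V y $ i * eta i y) > 0"
proof -
  assume y: "y \<in> U" and v: "V y \<noteq> 0"
  have "(\<Sum>i\<in>UNIV. \<Sum>j\<in>UNIV. g y $ i $ j * V y $ i * V y $ j) > 0" by (rule gpos[OF y v])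
  moreover have "(\<Sum>i\<in>UNIV. V y $ i * eta i y) = (\<Sum>i\<in>UNIV. \<Sum>j\<in>UNIV. g y $ i $ j * V y $ i * V y $ j)"
    unfolding dual_form_def by (simp add: sum_distrib_left mult_ac)
  ultimately show ?thesis by simp
qed

lemma final_point:
  assumes sol: "almost_eta_ricci_soliton U g (dual_form g V) V lam mu"
    and S: "\<forall>x\<in>U. scalar_curvature g x = c"
    and a0: "a \<noteq> 0" and n1: "CARD('n) > 1"
    and x: "x \<in> U"
  shows "ricci g i j x = 0"
proof -
  have smL: "smooth_on U lam" and smM: "smooth_on U mu"
    using sol unfolding almost_eta_ricci_soliton_def by blast+
  have Rf: "ricci g i j y = (lam y - a) * g y $ i $ j + mu y * (eta i y * eta j y)" if y: "y \<in> U" for i j y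
  proof -
    have "(1/2) * lie_deriv_metric g V i j y + ricci g i j y = lam y * g y $ i $ j + mu y * eta i y * eta j y"
      using sol y unfolding almost_eta_ricci_soliton_def by blast
    then show ?thesis using lieg[OF y, of i j] by (simp add: algebra_simps)
  qed
  define f where "f y = (\<Sum>i\<in>UNIV. V y $ i * eta i y)" for y
  have EF: "((\<Sum>l\<in>UNIV. V y $ l * pd l lam y) + 2 * a * (lam y - a)) * g y $ i $ j
      + ((\<Sum>l\<in>UNIV. V y $ l * pd l mu y) + 4 * a * mu y) * (eta i y * eta j y) = 0" if y: "y \<in> U" for i j y
  proof -
    have dR: "pd l (ricci g i j) y = pd l lam y * g y $ i $ j + (lam y - a) * dg l i j y
        + (pd l mu y * (eta i y * eta j y) + mu y * (pd l (eta i) y * eta j y + eta i y * pd l (eta j) y))" for l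
    proof -
      have "pd l (ricci g i j) y = pd l (\<lambda>z. (lam z - a) * g z $ i $ j + mu z * (eta i z * eta j z)) y"
        by (rule pd_local[OF opU y]) (simp add: Rf)
      also have "\<dots> = pd l lam y * g y $ i $ j + (lam y - a) * dg l i j y
        + (pd l mu y * (eta i y * eta j y) + mu y * (pd l (eta i) y * eta j y + eta i y * pd l (eta j) y))"
        using y smL smM by simp
      finally show ?thesis .
    qed
    have LG: "(\<Sum>l\<in>UNIV. V y $ l * dg l i j y) + (\<Sum>l\<in>UNIV. P l i y * g y $ l $ j) + (\<Sum>l\<in>UNIV. P l j y * g y $ i $ l) = 2 * a * g y $ i $ j"
      using lieg[OF y, of i j] unfolding lie_deriv_metric_def by (simp add: sum.distrib mult_ac)
    have E: "(\<Sum>l\<in>UNIV. V y $ l * pd l (ricci g i j) y) + (\<Sum>l\<in>UNIV. P l i y * ricci g l j y)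
       + (\<Sum>l\<in>UNIV. P l j y * ricci g i l y) = 0" by (rule E_identity[OF y])
    have "(\<Sum>l\<in>UNIV. V y $ l * pd l (ricci g i j) y) + (\<Sum>l\<in>UNIV. P l i y * ricci g l j y)
       + (\<Sum>l\<in>UNIV. P l j y * ricci g i l y)
     = (\<Sum>l\<in>UNIV. V y $ l * pd l lam y) * g y $ i $ j
       + (lam y - a) * ((\<Sum>l\<in>UNIV. V y $ l * dg l i j y) + (\<Sum>l\<in>UNIV. P l i y * g y $ l $ j) + (\<Sum>l\<in>UNIV. P l j y * g y $ i $ l))
       + (\<Sum>l\<in>UNIV. V y $ l * pd l mu y) * (eta i y * eta j y)
       + mu y * eta j y * ((\<Sum>l\<in>UNIV. V y $ l * pd l (eta i) y) + (\<Sum>l\<in>UNIV. P l i y * eta l y))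
       + mu y * eta i y * ((\<Sum>l\<in>UNIV. V y $ l * pd l (eta j) y) + (\<Sum>l\<in>UNIV. P l j y * eta l y))"
      by (simp add: dR Rf[OF y] sum.distrib sum_subtractf sum_distrib_left sum_distrib_right algebra_simps)
    also have "\<dots> = ((\<Sum>l\<in>UNIV. V y $ l * pd l lam y) + 2 * a * (lam y - a)) * g y $ i $ j
      + ((\<Sum>l\<in>UNIV. V y $ l * pd l mu y) + 4 * a * mu y) * (eta i y * eta j y)"
      by (simp only: LG Leta[OF y]) (simp add: algebra_simps)
    finally show ?thesis using E by simp
  qed
  show ?thesis
  proof (cases "V x = 0")
    case True
    have e0: "eta k x = 0" for k unfolding dual_form_def using True by simp
    have "2 * a * (lam x - a) * g x $ i $ i = 0" using EF[OF x, of i i] True e0 by simp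
    moreover have "g x $ i $ i > 0"
    proof -
      have "(\<Sum>p\<in>UNIV. \<Sum>q\<in>UNIV. g x $ p $ q * axis i 1 $ p * axis i 1 $ q) > 0"
        by (rule gpos[OF x]) simp
      moreover have "(\<Sum>p\<in>UNIV. \<Sum>q\<in>UNIV. g x $ p $ q * axis i (1::real) $ p * axis i 1 $ q) = g x $ i $ i"
      proof -
        have ax: "axis i (1::real) $ q = (if q = i then 1 else 0)" for q by (simp add: axis_def)
        have "(\<Sum>p\<in>UNIV. \<Sum>q\<in>UNIV. g x $ p $ q * axis i (1::real) $ p * axis i 1 $ q)
            = (\<Sum>p\<in>UNIV. g x $ p $ i * (if p = i then 1 else 0) * 1)"
          by (intro sum.cong refl, simp only: ax, rule sum_if_mult1)
        also have "\<dots> = g x $ i $ i" using sum_if_mult1[of "\<lambda>p. g x $ p $ i" i 1] by simp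
        finally show ?thesis .
      qed
      ultimately show ?thesis by simp
    qed
    ultimately have "lam x = a" using a0 by simp
    then show ?thesis using Rf[OF x, of i j] e0 by simp
  next
    case False
    define U' where "U' = {y \<in> U. V y \<noteq> 0}"
    have xU': "x \<in> U'" using x False by (simp add: U'_def)
    have opU': "open U'"
    proof -
      have eq: "U' = (\<Union>k. U \<inter> (\<lambda>y. V y $ k) -` (- {0}))"
        unfolding U'_def by (auto simp: vec_eq_iff)
      have op:  "open (U \<inter> (\<lambda>y. V y $ k) -` (- {0}))" for k
        using continuous_on_open_vimage[OF opU, THEN iffD1, OF smooth_cont[OF opU sm_V[of k]], rule_format, of "- {0}"] by (metis Int_commute closed_singleton open_Compl)
      have "open (\<Union>k. U \<inter> (\<lambda>y. V y $ k) -` (- {0}))" using op by (intro open_UN) auto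
      then show ?thesis by (simp only: eq)
    qed
    have key: "lam y - a + mu y * f y = 0" "f y > 0" if y: "y \<in> U'" for y
    proof -
      have yU: "y \<in> U" and vy: "V y \<noteq> 0" using y by (auto simp: U'_def)
      show fp: "f y > 0" unfolding f_def by (rule f_pos[OF yU vy])
      have "(\<Sum>m\<in>UNIV. V y $ m * ricci g m j y) = 0" for j by (rule RicV[OF yU])
      then have "(\<Sum>m\<in>UNIV. V y $ m * ((lam y - a) * g y $ m $ j + mu y * (eta m y * eta j y))) = 0" for j
        using Rf[OF yU] by simp
      then have "(lam y - a) * eta j y + mu y * f y * eta j y = 0" for j
      proof -
        fix j
        assume h: "\<And>j. (\<Sum>m\<in>UNIV. V y $ m * ((lam y - a) * g y $ m $ j + mu y * (eta m y * eta j y))) = 0"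
        have "(\<Sum>m\<in>UNIV. V y $ m * ((lam y - a) * g y $ m $ j + mu y * (eta m y * eta j y)))
            = (lam y - a) * (\<Sum>m\<in>UNIV. V y $ m * g y $ m $ j) + mu y * (\<Sum>m\<in>UNIV. V y $ m * eta m y) * eta j y"
          by (simp add: sum.distrib sum_subtractf sum_distrib_left sum_distrib_right algebra_simps)
        moreover have "(\<Sum>m\<in>UNIV. V y $ m * g y $ m $ j) = eta j y"
          unfolding dual_form_def by (rule sum.cong[OF refl]) (simp add: gsym[OF yU, of _ j] mult.commute)
        ultimately show "(lam y - a) * eta j y + mu y * f y * eta j y = 0" using h[of j] by (simp add: f_def)
      qed
      then have "(\<Sum>j\<in>UNIV. V y $ j * ((lam y - a) * eta j y + mu y * f y * eta j y)) = 0" by simp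
      moreover have "(\<Sum>j\<in>UNIV. V y $ j * ((lam y - a) * eta j y + mu y * f y * eta j y)) = (lam y - a + mu y * f y) * (\<Sum>j\<in>UNIV. V y $ j * eta j y)"
        by (simp add: sum_distrib_left algebra_simps)
      ultimately have "(lam y - a + mu y * f y) * f y = 0" by (simp add: f_def)
      then show "lam y - a + mu y * f y = 0" using fp by simp
    qed
    have lamc: "lam y = a + c / (real CARD('n) - 1)" if y: "y \<in> U'" for y
    proof -
      have yU: "y \<in> U" using y by (simp add: U'_def)
      have "c = scalar_curvature g y" using S yU by simp
      also have "\<dots> = (\<Sum>i\<in>UNIV. \<Sum>j\<in>UNIV. (lam y - a) * (ginv g i j y * g y $ i $ j) + mu y * (ginv g i j y * (eta i y * eta j y)))"
        unfolding scalar_curvature_def by (intro sum.cong refl) (simp add: Rf[OF yU] algebra_simps)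
      also have "\<dots> = (lam y - a) * (\<Sum>i\<in>UNIV. \<Sum>j\<in>UNIV. ginv g i j y * g y $ i $ j) + mu y * (\<Sum>i\<in>UNIV. \<Sum>j\<in>UNIV. ginv g i j y * (eta i y * eta j y))"
        by (simp only: sum.distrib sum_distrib_left)
      also have "\<dots> = (lam y - a) * real CARD('n) + mu y * f y"
        by (simp only: tr_g[OF yU] tr_eta[OF yU] f_def)
      finally have "c = (lam y - a) * (real CARD('n) - 1)" using key[OF y] by (simp add: algebra_simps)
      moreover have "real CARD('n) - 1 \<noteq> 0" using n1 by simp
      ultimately show ?thesis by (simp add: field_simps)
    qed
    have dl: "pd l lam x = 0" for l
    proof -
      have "pd l lam x = pd l (\<lambda>y. a + c / (real CARD('n) - 1)) x"
        by (rule pd_local[OF opU' xU']) (simp add: lamc)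
      then show ?thesis by simp
    qed
    define \<beta> where "\<beta> = (\<Sum>l\<in>UNIV. V x $ l * pd l mu x) + 4 * a * mu x"
    have EF': "2 * a * (lam x - a) * g x $ i $ j + \<beta> * (eta i x * eta j x) = 0" for i j
      using EF[OF x, of i j] by (simp add: dl \<beta>_def)
    have c1: "2 * a * (lam x - a) * f x + \<beta> * (f x * f x) = 0"
    proof -
      have "(\<Sum>i\<in>UNIV. \<Sum>j\<in>UNIV. V x $ i * V x $ j * (2 * a * (lam x - a) * g x $ i $ j + \<beta> * (eta i x * eta j x))) = 0"
        by (simp add: EF')
      moreover have "(\<Sum>i\<in>UNIV. \<Sum>j\<in>UNIV. V x $ i * V x $ j * (2 * a * (lam x - a) * g x $ i $ j + \<beta> * (eta i x * eta j x)))
         = 2 * a * (lam x - a) * (\<Sum>i\<in>UNIV. \<Sum>j\<in>UNIV. V x $ i * V x $ j * g x $ i $ j)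
           + \<beta> * (\<Sum>i\<in>UNIV. \<Sum>j\<in>UNIV. (V x $ i * eta i x) * (V x $ j * eta j x))"
      proof -
        have "(\<Sum>i\<in>UNIV. \<Sum>j\<in>UNIV. V x $ i * V x $ j * (2 * a * (lam x - a) * g x $ i $ j + \<beta> * (eta i x * eta j x)))
          = (\<Sum>i\<in>UNIV. \<Sum>j\<in>UNIV. 2 * a * (lam x - a) * (V x $ i * V x $ j * g x $ i $ j) + \<beta> * ((V x $ i * eta i x) * (V x $ j * eta j x)))"
          by (intro sum.cong refl) (simp add: algebra_simps)
        then show ?thesis by (simp only: sum.distrib sum_distrib_left)
      qed
      moreover have "(\<Sum>i\<in>UNIV. \<Sum>j\<in>UNIV. V x $ i * V x $ j * g x $ i $ j) = f x"
        unfolding f_def dual_form_def by (simp add: sum_distrib_left mult_ac)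
      moreover have "(\<Sum>i\<in>UNIV. \<Sum>j\<in>UNIV. (V x $ i * eta i x) * (V x $ j * eta j x)) = f x * f x"
        unfolding f_def by (simp add: sum_product)
      ultimately show ?thesis by simp
    qed
    have c2: "2 * a * (lam x - a) * real CARD('n) + \<beta> * f x = 0"
    proof -
      have "(\<Sum>i\<in>UNIV. \<Sum>j\<in>UNIV. ginv g i j x * (2 * a * (lam x - a) * g x $ i $ j + \<beta> * (eta i x * eta j x))) = 0"
        by (simp add: EF')
      moreover have "(\<Sum>i\<in>UNIV. \<Sum>j\<in>UNIV. ginv g i j x * (2 * a * (lam x - a) * g x $ i $ j + \<beta> * (eta i x * eta j x)))
         = 2 * a * (lam x - a) * (\<Sum>i\<in>UNIV. \<Sum>j\<in>UNIV. ginv g i j x * g x $ i $ j)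
           + \<beta> * (\<Sum>i\<in>UNIV. \<Sum>j\<in>UNIV. ginv g i j x * (eta i x * eta j x))"
      proof -
        have "(\<Sum>i\<in>UNIV. \<Sum>j\<in>UNIV. ginv g i j x * (2 * a * (lam x - a) * g x $ i $ j + \<beta> * (eta i x * eta j x)))
          = (\<Sum>i\<in>UNIV. \<Sum>j\<in>UNIV. 2 * a * (lam x - a) * (ginv g i j x * g x $ i $ j) + \<beta> * (ginv g i j x * (eta i x * eta j x)))"
          by (intro sum.cong refl) (simp add: algebra_simps)
        then show ?thesis by (simp only: sum.distrib sum_distrib_left)
      qed
      ultimately show ?thesis using tr_g[OF x] tr_eta[OF x] f_def by simp
    qed
    have fp: "f x > 0" using key(2)[OF xU'] .
    have "(2 * a * (lam x - a) + \<beta> * f x) * f x = 0" using c1 by (simp add: algebra_simps)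
    then have c1': "2 * a * (lam x - a) + \<beta> * f x = 0" using fp by simp
    have "2 * a * (lam x - a) * (real CARD('n) - 1) = 0" using c1' c2 by (simp add: algebra_simps)
    then have lx: "lam x = a" using a0 n1 by simp
    then have "mu x * f x = 0" using key(1)[OF xU'] by simp
    then have "mu x = 0" using fp by simp
    then show ?thesis using Rf[OF x, of i j] lx by simp
  qed
qed

end

theorem mainTheorem2:
  fixes U :: "(real^'n::finite) set"
    and g :: "real^'n \<Rightarrow> real^'n^'n"
    and V :: "real^'n \<Rightarrow> real^'n"
    and lam mu :: "real^'n \<Rightarrow> real"
    and a :: real
  assumes "CARD('n) > 3"
    and "riemannian_metric_on U g"
    and "\<exists>c. \<forall>x\<in>U. scalar_curvature g x = c"
    and "vector_field_on U V"
    and "a \<noteq> 0"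
    and "\<forall>X. \<forall>x\<in>U. cov_deriv g X V x = a *\<^sub>R X x"
    and "almost_eta_ricci_soliton U g (dual_form g V) V lam mu"
  shows "ricci_flat_on U g"
proof -
  interpret sol U g V a
    by unfold_locales (use assms in auto)
  obtain c where c: "\<forall>x\<in>U. scalar_curvature g x = c" using assms(3) by blast
  have n1: "CARD('n) > 1" using assms(1) by simp
  show ?thesis unfolding ricci_flat_on_def
    using final_point[OF assms(7) c assms(5) n1] by blast
qed

end
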